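(* Let $\mathcal B$ be a BMDP and consider the Q-learning process with learning rates $\lambda_i\in[0,1]$ satisfying $\sum_{i=0}^\infty\lambda_i=\infty$ and $\sum_{i=0}^\infty\lambda_i^2<\infty$, and a fixed selection distribution with $p_{q,a}\ge p_{\min}>0$ for all pairs, started from any $Q_0\ge\mathbf 0$. Then for every pair $(q,a)$ with $Q^*(q,a)=\infty$, almost surely $Q_i(q,a)\to\infty$ as $i\to\infty$.
   Context: A branching Markov decision process (BMDP) is a tuple $\mathcal B=(\mathcal T,A,p,c)$ where $\mathcal T$ is a finite set of types, $A$ is a finite set of actions, $p:\mathcal T\times A\to \mathrm{Dist}(\mathcal T^* )$ is a partial function assigning to some pairs $(q,a)$ a probability distribution with finite support over the set $\mathcal T^*$ of finite lists of types, and $c:\mathcal T\times A\to\mathbb R_{>0}$ is a strictly positive cost function. $A(q)$ is the (nonempty) set of $a$ with $p(q,a)$ defined. For a list $\alpha$, $|\alpha|$ is its length and $\alpha_i$ its $i$-th element. The BMDP induces an MDP on lists of entities: an action $(i,a)$ with $a\in A(\alpha_i)$ replaces entity $\alpha_i$ of the current list by a list $\beta$ drawn from $p(\alpha_i,a)$ at cost $c(\alpha_i,a)$; the empty list is absorbing with no cost. $\mathbf c^*_q\in[0,\infty]$ is the infimum over all (history-dependent, randomized) strategies of the expected total cost starting from the single entity $q$. Define $Q^*(q,a)=c(q,a)+\sum_{\alpha\in\mathcal T^*}p(q,a)(\alpha)\sum_{j=1}^{|\alpha|}\mathbf c^*_{\alpha_j}\in[0,\infty]$, with conventions $0\cdot\infty=0$,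 $r+\infty=\infty$. Q-learning process for a BMDP: Q-values are vectors $Q$ indexed by pairs $(q,a)$ with $q\in\mathcal T$, $a\in A(q)$. Given deterministic learning rates $\lambda_i\in[0,1]$, a fixed probability distribution $(p_{q,a})$ over pairs and an initial vector $Q_0\ge\mathbf 0$, at each step $i$ a pair $(q_i,a_i)$ is selected with probability $p_{q_i,a_i}$ independently of all previous randomness, a list $\beta^i$ is drawn from $p(q_i,a_i)$ independently, and $Q_{i+1}(q_i,a_i)=(1-\lambda_i)Q_i(q_i,a_i)+\lambda_i\big(c(q_i,a_i)+\sum_{j=1}^{|\beta^i|}\min_{a'\in A(\beta^i_j)}Q_i(\beta^i_j,a')\big)$, all other entries unchanged. *)

theory Defs
  imports "HOL-Probability.Probability"
begin

text \<open>A BMDP is given by: types 'q (finite type), actions 'a (finite type),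
  enabled actions A :: 'q => 'a set, transition distributions p q a (a list-valued pmf,
  meaningful for a in A q), and costs c q a.\<close>

definition is_bmdp :: "('q::finite \<Rightarrow> 'a::finite set) \<Rightarrow> ('q \<Rightarrow> 'a \<Rightarrow> 'q list pmf)
    \<Rightarrow> ('q \<Rightarrow> 'a \<Rightarrow> real) \<Rightarrow> bool" where
  "is_bmdp A p c \<longleftrightarrow> (\<forall>q. A q \<noteq> {}) \<and>
     (\<forall>q. \<forall>a\<in>A q. finite (set_pmf (p q a)) \<and> c q a > 0)"

text \<open>Histories: list of past (state, chosen action) pairs; the current state is a
  separate argument. An action of the induced MDP is a pair (i, a): entity number i
  (0-based) is expanded with BMDP action a.\<close>

type_synonym ('q,'a) hist = "('q list \<times> (nat \<times> 'a)) list"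
type_synonym ('q,'a) strategy = "('q,'a) hist \<Rightarrow> 'q list \<Rightarrow> (nat \<times> 'a) pmf"

definition strategies :: "('q \<Rightarrow> 'a set) \<Rightarrow> ('q,'a) strategy set" where
  "strategies A = {\<sigma>. \<forall>h \<alpha>. \<alpha> \<noteq> [] \<longrightarrow>
      set_pmf (\<sigma> h \<alpha>) \<subseteq> {(i,a). i < length \<alpha> \<and> a \<in> A (\<alpha> ! i)}}"

definition replace_at :: "'q list \<Rightarrow> nat \<Rightarrow> 'q list \<Rightarrow> 'q list" where
  "replace_at \<alpha> i \<beta> = take i \<alpha> @ \<beta> @ drop (Suc i) \<alpha>"

primrec ncost :: "('q \<Rightarrow> 'a \<Rightarrow> 'q list pmf) \<Rightarrow> ('q \<Rightarrow> 'a \<Rightarrow> real) \<Rightarrow> ('q,'a) strategy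
    \<Rightarrow> nat \<Rightarrow> ('q,'a) hist \<Rightarrow> 'q list \<Rightarrow> ennreal" where
  "ncost p c \<sigma> 0 = (\<lambda>h \<alpha>. 0)"
| "ncost p c \<sigma> (Suc n) = (\<lambda>h \<alpha>. if \<alpha> = [] then 0 else
     \<integral>\<^sup>+ x. (ennreal (c (\<alpha> ! fst x) (snd x)) +
        \<integral>\<^sup>+ \<beta>. ncost p c \<sigma> n (h @ [(\<alpha>, x)]) (replace_at \<alpha> (fst x) \<beta>)
          \<partial>measure_pmf (p (\<alpha> ! fst x) (snd x)))
     \<partial>measure_pmf (\<sigma> h \<alpha>))"

text \<open>Expected total cost = limit (supremum) of the expected n-step costs
  (monotone convergence; costs are nonnegative).\<close>
definition total_cost :: "('q \<Rightarrow> 'a \<Rightarrow> 'q list pmf) \<Rightarrow> ('q \<Rightarrow> 'a \<Rightarrow> real) \<Rightarrow> ('q,'a) strategy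
    \<Rightarrow> 'q list \<Rightarrow> ennreal" where
  "total_cost p c \<sigma> \<alpha> = (SUP n. ncost p c \<sigma> n [] \<alpha>)"

definition cstar :: "('q \<Rightarrow> 'a set) \<Rightarrow> ('q \<Rightarrow> 'a \<Rightarrow> 'q list pmf) \<Rightarrow> ('q \<Rightarrow> 'a \<Rightarrow> real)
    \<Rightarrow> 'q \<Rightarrow> ennreal" where
  "cstar A p c q = (INF \<sigma>\<in>strategies A. total_cost p c \<sigma> [q])"

definition Qstar :: "('q \<Rightarrow> 'a set) \<Rightarrow> ('q \<Rightarrow> 'a \<Rightarrow> 'q list pmf) \<Rightarrow> ('q \<Rightarrow> 'a \<Rightarrow> real)
    \<Rightarrow> 'q \<Rightarrow> 'a \<Rightarrow> ennreal" where
  "Qstar A p c q a = ennreal (c q a) +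
     (\<integral>\<^sup>+ \<alpha>. (\<Sum>j<length \<alpha>. cstar A p c (\<alpha> ! j)) \<partial>measure_pmf (p q a))"

definition sample_pmf :: "('q \<Rightarrow> 'a \<Rightarrow> 'q list pmf) \<Rightarrow> ('q \<times> 'a) pmf
    \<Rightarrow> (('q \<times> 'a) \<times> 'q list) pmf" where
  "sample_pmf p sel = sel \<bind> (\<lambda>qa. map_pmf (\<lambda>\<beta>. (qa, \<beta>)) (p (fst qa) (snd qa)))"

definition sample_space :: "('q \<Rightarrow> 'a \<Rightarrow> 'q list pmf) \<Rightarrow> ('q \<times> 'a) pmf
    \<Rightarrow> (nat \<Rightarrow> ('q \<times> 'a) \<times> 'q list) measure" where
  "sample_space p sel = PiM UNIV (\<lambda>_. measure_pmf (sample_pmf p sel))"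

primrec qlearn :: "('q \<Rightarrow> 'a set) \<Rightarrow> ('q \<Rightarrow> 'a \<Rightarrow> real) \<Rightarrow> (nat \<Rightarrow> real)
    \<Rightarrow> ('q \<Rightarrow> 'a \<Rightarrow> real) \<Rightarrow> (nat \<Rightarrow> ('q \<times> 'a) \<times> 'q list) \<Rightarrow> nat \<Rightarrow> 'q \<Rightarrow> 'a \<Rightarrow> real" where
  "qlearn A c lr Q0 \<omega> 0 = Q0"
| "qlearn A c lr Q0 \<omega> (Suc i) =
     (let Q = qlearn A c lr Q0 \<omega> i; q = fst (fst (\<omega> i)); a = snd (fst (\<omega> i)); \<beta> = snd (\<omega> i)
      in Q(q := (Q q)(a := (1 - lr i) * Q q a +
             lr i * (c q a + (\<Sum>j<length \<beta>. Min (Q (\<beta> ! j) ` A (\<beta> ! j)))))))"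

end

theory Submission
  imports Defs
begin

lemma pims_prob: "prob_space (PiM UNIV (\<lambda>_::nat. measure_pmf D))"
  by (intro prob_space_PiM measure_pmf.prob_space_axioms)

lemma pims_pps: "product_prob_space (\<lambda>_::nat. measure_pmf D)"
  by (intro product_prob_spaceI measure_pmf.prob_space_axioms)

lemma indep_components:
  fixes D :: "'b pmf"
  assumes fin: "finite I"
  shows "prob_space.indep_vars (PiM UNIV (\<lambda>_::nat. measure_pmf D)) (\<lambda>_. measure_pmf D) (\<lambda>k \<omega>. \<omega> k) I"
proof (cases "I = {}")
  case True
  interpret prob_space "PiM UNIV (\<lambda>_::nat. measure_pmf D)" by (rule pims_prob)
  show ?thesis using True by (simp add: indep_vars_def indep_sets_def)
next
  case False
  interpret P: product_prob_space "\<lambda>_::nat. measure_pmf D" UNIV by (rule pims_pps)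
  have A: "(\<lambda>i. distr (PiM UNIV (\<lambda>_::nat. measure_pmf D)) (measure_pmf D) (\<lambda>\<omega>. \<omega> i)) = (\<lambda>_. measure_pmf D)"
  proof
    fix i :: nat
    show "distr (PiM UNIV (\<lambda>_::nat. measure_pmf D)) (measure_pmf D) (\<lambda>\<omega>. \<omega> i) = measure_pmf D"
      using P.PiM_component[of i] by simp
  qed
  have B: "distr (PiM UNIV (\<lambda>_::nat. measure_pmf D)) (PiM I (\<lambda>_. measure_pmf D)) (\<lambda>x. restrict x I) = PiM I (\<lambda>_. measure_pmf D)"
    using P.distr_PiM_restrict_finite[OF fin] by simp
  have C: "P.indep_vars (\<lambda>_. measure_pmf D) (\<lambda>k \<omega>. \<omega> k) I \<longleftrightarrow>
    distr (Pi\<^sub>M UNIV (\<lambda>_::nat. measure_pmf D)) (Pi\<^sub>M I (\<lambda>_. measure_pmf D)) (\<lambda>x. \<lambda>i\<in>I. x i) =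
    Pi\<^sub>M I (\<lambda>i. distr (Pi\<^sub>M UNIV (\<lambda>_::nat. measure_pmf D)) (measure_pmf D) (\<lambda>\<omega>. \<omega> i))"
    by (rule P.indep_vars_iff_distr_eq_PiM[OF False]) simp
  show ?thesis by (rule C[THEN iffD2]) (simp only: A B)
qed

lemma expectation_component:
  fixes D :: "'b pmf" and g :: "'b \<Rightarrow> real"
  shows "integral\<^sup>L (PiM UNIV (\<lambda>_::nat. measure_pmf D)) (\<lambda>\<omega>. g (\<omega> k)) = integral\<^sup>L (measure_pmf D) g"
proof -
  interpret P: product_prob_space "\<lambda>_::nat. measure_pmf D" UNIV by (rule pims_pps)
  have "integral\<^sup>L (distr (PiM UNIV (\<lambda>_::nat. measure_pmf D)) (measure_pmf D) (\<lambda>\<omega>. \<omega> k)) g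
     = integral\<^sup>L (PiM UNIV (\<lambda>_::nat. measure_pmf D)) (\<lambda>\<omega>. g (\<omega> k))"
    by (rule integral_distr) auto
  then show ?thesis using P.PiM_component[of k] by simp
qed

lemma exp_neg_le_inv: "x > 0 \<Longrightarrow> exp (- x) \<le> 1 / (x::real)"
proof -
  assume x: "x > 0"
  have "x \<le> exp x" using exp_ge_add_one_self[of x] by linarith
  then show ?thesis using x by (simp add: exp_minus field_simps)
qed

lemma block_sum_summable:
  fixes f :: "nat \<Rightarrow> real" and b :: "nat \<Rightarrow> nat"
  assumes f: "\<And>i. 0 \<le> f i" "summable f" and b: "strict_mono b"
  shows "summable (\<lambda>k. \<Sum>i\<in>{b k..<b (Suc k)}. f i)"
proof (rule summableI_nonneg_bounded)
  show "\<And>k. 0 \<le> (\<Sum>i\<in>{b k..<b (Suc k)}. f i)" using f by (simp add: sum_nonneg)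
  have mono: "b k \<le> b (Suc k)" for k using b by (simp add: strict_mono_Suc_iff less_imp_le)
  have eq: "(\<Sum>k<n. \<Sum>i\<in>{b k..<b (Suc k)}. f i) = (\<Sum>i\<in>{b 0..<b n}. f i)" for n
  proof (induction n)
    case 0 then show ?case by simp
  next
    case (Suc n)
    have "b 0 \<le> b n" using b by (simp add: strict_mono_less_eq)
    then show ?case using Suc mono[of n] by (simp add: sum.atLeastLessThan_concat)
  qed
  show "(\<Sum>k<n. \<Sum>i\<in>{b k..<b (Suc k)}. f i) \<le> suminf f" for n
  proof -
    have "(\<Sum>i\<in>{b 0..<b n}. f i) \<le> (\<Sum>i<b n. f i)"
      by (rule sum_mono2) (use f in auto)
    also have "\<dots> \<le> suminf f" by (rule sum_le_suminf) (use f in auto)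
    finally show ?thesis using eq by simp
  qed
qed

lemma block_concentration:
  fixes D :: "'b pmf" and g :: "'b \<Rightarrow> real" and lr :: "nat \<Rightarrow> real" and b :: "nat \<Rightarrow> nat"
  assumes R: "\<And>x. \<bar>g x\<bar> \<le> R" and Rpos: "R > 0"
    and lr_nonneg: "\<And>i. 0 \<le> lr i"
    and lr_sq: "summable (\<lambda>i. (lr i)\<^sup>2)"
    and b: "strict_mono b"
    and blk: "\<And>k. (\<Sum>i\<in>{b k..<b (Suc k)}. lr i) \<ge> h"
    and h: "h > 0" and t: "t > 0"
  shows "AE \<omega> in PiM UNIV (\<lambda>_::nat. measure_pmf D). eventually (\<lambda>k.
      (\<Sum>i\<in>{b k..<b (Suc k)}. lr i * g (\<omega> i)) >
      (\<Sum>i\<in>{b k..<b (Suc k)}. lr i) * (measure_pmf.expectation D g - t)) sequentially"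
proof -
  define M where "M = PiM UNIV (\<lambda>_::nat. measure_pmf D)"
  interpret prob_space M unfolding M_def by (rule pims_prob)
  define I where "I = (\<lambda>k. {b k..<b (Suc k)})"
  define L where "L = (\<lambda>k. \<Sum>i\<in>I k. lr i)"
  define X where "X = (\<lambda>i (\<omega>::nat \<Rightarrow> 'b). lr i * g (\<omega> i))"
  define Eg where "Eg = measure_pmf.expectation D g"
  define Bad where "Bad = (\<lambda>k. {\<omega>\<in>space M. (\<Sum>i\<in>I k. X i \<omega>) \<le> L k * Eg - t * L k})"
  define s where "s = (\<lambda>k. \<Sum>i\<in>I k. (lr i)\<^sup>2)"
  have gm[measurable]: "(\<lambda>\<omega>. g (\<omega> i)) \<in> borel_measurable M" for i
    unfolding M_def by (rule measurable_compose[OF measurable_component_singleton[of i UNIV]]) simp_all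
  have Xmeas[measurable]: "X i \<in> borel_measurable M" for i
    unfolding X_def by measurable
  have Bad_sets[measurable]: "Bad k \<in> sets M" for k
    unfolding Bad_def by measurable
  have EX: "expectation (X i) = lr i * Eg" for i
    unfolding X_def M_def Eg_def using expectation_component[of D "\<lambda>x. lr i * g x" i] by simp
  have Lh: "L k \<ge> h" for k using blk unfolding L_def I_def by auto
  have spos: "s k > 0" for k
  proof -
    have "\<exists>i\<in>I k. lr i \<noteq> 0"
    proof (rule ccontr)
      assume "\<not> ?thesis"
      then have "L k = 0" unfolding L_def by simp
      then show False using Lh[of k] h by simp
    qed
    then obtain i where i: "i \<in> I k" "lr i \<noteq> 0" by blast
    have "0 < (lr i)\<^sup>2" using i by simp
    also have "\<dots> \<le> s k" unfolding s_def
      by (rule member_le_sum) (use i in \<open>auto simp: I_def\<close>)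
    finally show ?thesis .
  qed
  have bound: "measure M (Bad k) \<le> 2 * R\<^sup>2 / (t\<^sup>2 * h\<^sup>2) * s k" for k
  proof -
    interpret H: Hoeffding_ineq M "I k" X "\<lambda>i. - (lr i * R)" "\<lambda>i. lr i * R" "L k * Eg"
    proof unfold_locales
      show "finite (I k)" by (simp add: I_def)
      show "indep_vars (\<lambda>_. borel) X (I k)"
      proof -
        have "indep_vars (\<lambda>_. measure_pmf D) (\<lambda>k \<omega>. \<omega> k) (I k)"
          using indep_components[of "I k" D] unfolding M_def by (simp add: I_def)
        then have "indep_vars (\<lambda>_. borel) (\<lambda>i \<omega>. (\<lambda>x. lr i * g x) (\<omega> i)) (I k)"
          by (rule indep_vars_compose2) simp
        then show ?thesis unfolding X_def by simp
      qed
      show "AE x in M. X i x \<in> {- (lr i * R)..lr i * R}" if "i \<in> I k" for i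
      proof (rule AE_I2)
        fix x
        have "\<bar>lr i * g (x i)\<bar> \<le> lr i * R"
          using R[of "x i"] lr_nonneg[of i] by (simp add: abs_mult mult_left_mono)
        then show "X i x \<in> {- (lr i * R)..lr i * R}" unfolding X_def by (auto simp: abs_le_iff)
      qed
      show "L k * Eg \<equiv> \<Sum>i\<in>I k. expectation (X i)"
        by (simp add: EX L_def sum_distrib_right)
    qed
    have sq: "(\<Sum>i\<in>I k. (lr i * R - - (lr i * R))\<^sup>2) = 4 * R\<^sup>2 * s k"
      by (simp add: s_def sum_distrib_left power2_eq_square algebra_simps)
    have "measure M (Bad k) = prob {x\<in>space M. (\<Sum>i\<in>I k. X i x) \<le> L k * Eg - t * L k}"
      unfolding Bad_def by simp
    also have "\<dots> \<le> exp (-2 * (t * L k)\<^sup>2 / (\<Sum>i\<in>I k. (lr i * R - - (lr i * R))\<^sup>2))"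
      by (rule H.Hoeffding_ineq_le) (use t Lh[of k] h spos[of k] Rpos sq in auto)
    also have "\<dots> = exp (- ((t * L k)\<^sup>2 / (2 * R\<^sup>2 * s k)))"
      unfolding sq using spos[of k] Rpos by (simp add: field_simps power2_eq_square)
    also have "\<dots> \<le> 1 / ((t * L k)\<^sup>2 / (2 * R\<^sup>2 * s k))"
      by (rule exp_neg_le_inv) (use t Lh[of k] h spos[of k] Rpos in auto)
    also have "\<dots> = 2 * R\<^sup>2 * s k / (t * L k)\<^sup>2" by simp
    also have "\<dots> \<le> 2 * R\<^sup>2 * s k / (t * h)\<^sup>2"
      apply (rule divide_left_mono)
      using t Lh[of k] h spos[of k] Rpos by (auto intro!: power_mono mult_pos_pos)
    also have "\<dots> = 2 * R\<^sup>2 / (t\<^sup>2 * h\<^sup>2) * s k" by (simp add: field_simps power_mult_distrib)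
    finally show ?thesis .
  qed
  have "summable s" unfolding s_def I_def
    by (rule block_sum_summable) (use lr_sq b in auto)
  then have "summable (\<lambda>k. measure M (Bad k))"
    by (rule summable_comparison_test'[where N=0, OF summable_mult[where c="2 * R\<^sup>2 / (t\<^sup>2 * h\<^sup>2)"]])
       (use bound in auto)
  then have "AE \<omega> in M. eventually (\<lambda>k. \<omega> \<in> space M - Bad k) sequentially"
    by (intro borel_cantelli_AE1) (auto simp: emeasure_eq_measure)
  then have "AE \<omega> in M. eventually (\<lambda>k.
      (\<Sum>i\<in>{b k..<b (Suc k)}. lr i * g (\<omega> i)) >
      (\<Sum>i\<in>{b k..<b (Suc k)}. lr i) * (measure_pmf.expectation D g - t)) sequentially"
  proof (rule AE_mp, intro AE_I2 impI)
    fix \<omega> assume sp: "\<omega> \<in> space M" and ev: "eventually (\<lambda>k. \<omega> \<in> space M - Bad k) sequentially"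
    from ev show "eventually (\<lambda>k. (\<Sum>i\<in>{b k..<b (Suc k)}. lr i * g (\<omega> i)) >
      (\<Sum>i\<in>{b k..<b (Suc k)}. lr i) * (measure_pmf.expectation D g - t)) sequentially"
      by (rule eventually_mono) (auto simp: Bad_def X_def L_def I_def Eg_def algebra_simps)
  qed
  then show ?thesis unfolding M_def .
qed

lemma prod_one_minus_ge:
  fixes x :: "nat \<Rightarrow> real"
  assumes "\<And>j. j \<in> {s..<e} \<Longrightarrow> 0 \<le> x j \<and> x j \<le> 1"
  shows "(\<Prod>j\<in>{s..<e}. (1 - x j)) \<ge> 1 - (\<Sum>j\<in>{s..<e}. x j)"
  using assms
proof (induction e)
  case 0 then show ?case by simp
next
  case (Suc e)
  show ?case
  proof (cases "s \<le> e")
    case False then show ?thesis by simp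
  next
    case True
    have IH: "(\<Prod>j\<in>{s..<e}. (1 - x j)) \<ge> 1 - (\<Sum>j\<in>{s..<e}. x j)" using Suc by auto
    have xe: "0 \<le> x e" "x e \<le> 1" using Suc.prems[of e] True by auto
    have P0: "(\<Prod>j\<in>{s..<e}. (1 - x j)) \<le> 1"
      by (rule prod_le_1) (use Suc.prems in auto)
    have S0: "(\<Sum>j\<in>{s..<e}. x j) \<ge> 0" by (rule sum_nonneg) (use Suc.prems in auto)
    have "(\<Prod>j\<in>{s..<Suc e}. (1 - x j)) = (\<Prod>j\<in>{s..<e}. (1 - x j)) * (1 - x e)"
      using True by (simp add: prod.atLeastLessThan_Suc)
    also have "\<dots> \<ge> (1 - (\<Sum>j\<in>{s..<e}. x j)) * (1 - x e) - 0"
      using IH xe by (simp add: mult_right_mono)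
    finally have "(\<Prod>j\<in>{s..<Suc e}. (1 - x j)) \<ge> (1 - (\<Sum>j\<in>{s..<e}. x j)) * (1 - x e)" by simp
    moreover have "(1 - (\<Sum>j\<in>{s..<e}. x j)) * (1 - x e) \<ge> 1 - (\<Sum>j\<in>{s..<Suc e}. x j)"
      using True S0 xe by (simp add: sum.atLeastLessThan_Suc algebra_simps mult_nonneg_nonneg)
    ultimately show ?thesis by linarith
  qed
qed

lemma prod_one_minus_le_exp:
  fixes x :: "nat \<Rightarrow> real"
  assumes "\<And>j. j \<in> A \<Longrightarrow> 0 \<le> x j \<and> x j \<le> 1"
  shows "(\<Prod>j\<in>A. (1 - x j)) \<le> exp (- (\<Sum>j\<in>A. x j))"
proof -
  have "(\<Prod>j\<in>A. (1 - x j)) \<le> (\<Prod>j\<in>A. exp (- x j))"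
  proof (rule prod_mono)
    fix j assume "j \<in> A"
    then show "0 \<le> 1 - x j \<and> 1 - x j \<le> exp (- x j)"
      using assms[of j] exp_ge_add_one_self[of "- x j"] by auto
  qed
  also have "\<dots> = exp (- (\<Sum>j\<in>A. x j))"
    by (cases "finite A") (simp_all add: exp_sum[symmetric] sum_negf)
  finally show ?thesis .
qed

lemma blockstep:
  fixes y U z :: "nat \<Rightarrow> real"
  assumes U: "\<And>j. j \<in> {s..<e} \<Longrightarrow> 0 \<le> U j \<and> U j \<le> 1"
    and z: "\<And>j. j \<in> {s..<e} \<Longrightarrow> 0 \<le> z j"
    and step: "\<And>j. j \<in> {s..<e} \<Longrightarrow> y (Suc j) \<ge> (1 - U j) * y j + U j * z j"
    and se: "s \<le> e"
  shows "y e \<ge> (\<Prod>j\<in>{s..<e}. (1 - U j)) * y s + (1 - (\<Sum>j\<in>{s..<e}. U j)) * (\<Sum>j\<in>{s..<e}. U j * z j)"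
  using U z step se
proof (induction e)
  case 0 then show ?case by simp
next
  case (Suc e)
  show ?case
  proof (cases "s \<le> e")
    case False
    then have "s = Suc e" using Suc.prems by simp
    then show ?thesis by simp
  next
    case True
    define P where "P = (\<Prod>j\<in>{s..<e}. (1 - U j))"
    define L where "L = (\<Sum>j\<in>{s..<e}. U j)"
    define S where "S = (\<Sum>j\<in>{s..<e}. U j * z j)"
    have IH: "y e \<ge> P * y s + (1 - L) * S" unfolding P_def L_def S_def
      by (rule Suc.IH) (use Suc.prems True in auto)
    have Ue: "0 \<le> U e" "U e \<le> 1" and ze: "0 \<le> z e" using Suc.prems True by auto
    have st: "y (Suc e) \<ge> (1 - U e) * y e + U e * z e" using Suc.prems True by auto
    have S0: "S \<ge> 0" unfolding S_def by (rule sum_nonneg) (use Suc.prems in auto)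
    have L0: "L \<ge> 0" unfolding L_def by (rule sum_nonneg) (use Suc.prems in auto)
    have "(1 - U e) * (P * y s + (1 - L) * S) \<le> (1 - U e) * y e"
      using IH Ue by (intro mult_left_mono) auto
    then have "y (Suc e) \<ge> (1 - U e) * (P * y s + (1 - L) * S) + U e * z e"
      using st by linarith
    moreover have "(1 - U e) * (P * y s + (1 - L) * S) + U e * z e \<ge>
        ((1 - U e) * P) * y s + (1 - (L + U e)) * (S + U e * z e)"
    proof -
      have a0: "(1 - U e) * (1 - L) \<ge> 1 - (L + U e)"
        using mult_nonneg_nonneg[OF Ue(1) L0] by (simp add: algebra_simps)
      have a: "(1 - U e) * (1 - L) * S \<ge> (1 - (L + U e)) * S"
        using mult_right_mono[OF a0 S0] .
      have b0: "1 - (L + U e) \<le> 1" using L0 Ue by simp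
      have b: "U e * z e \<ge> (1 - (L + U e)) * (U e * z e)"
        using mult_right_mono[OF b0 mult_nonneg_nonneg[OF Ue(1) ze]] by simp
      have c1: "(1 - U e) * (P * y s + (1 - L) * S) = ((1 - U e) * P) * y s + (1 - U e) * (1 - L) * S"
        by (simp add: distrib_left mult.assoc)
      have c2: "(1 - (L + U e)) * (S + U e * z e) = (1 - (L + U e)) * S + (1 - (L + U e)) * (U e * z e)"
        by (simp add: distrib_left)
      show ?thesis unfolding c1 c2 using a b by linarith
    qed
    moreover have e1: "(\<Prod>j\<in>{s..<Suc e}. (1 - U j)) = (1 - U e) * P"
      using True unfolding P_def by (subst prod.atLeastLessThan_Suc) (auto simp: mult.commute)
    moreover have e2: "(\<Sum>j\<in>{s..<Suc e}. U j) = L + U e"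
      using True by (simp add: sum.atLeastLessThan_Suc L_def)
    moreover have e3: "(\<Sum>j\<in>{s..<Suc e}. U j * z j) = S + U e * z e"
      using True by (simp add: sum.atLeastLessThan_Suc S_def)
    ultimately show ?thesis by (simp only: e1 e2 e3)
  qed
qed

lemma within_block:
  fixes y x :: "nat \<Rightarrow> real"
  assumes x: "\<And>j. j \<in> {s..<e} \<Longrightarrow> 0 \<le> x j \<and> x j \<le> 1"
    and y0: "\<And>j. 0 \<le> y j"
    and step: "\<And>j. j \<in> {s..<e} \<Longrightarrow> y (Suc j) \<ge> (1 - x j) * y j"
    and i: "s \<le> i" "i \<le> e"
  shows "y i \<ge> (1 - (\<Sum>j\<in>{s..<e}. x j)) * y s"
proof -
  have "y i \<ge> (\<Prod>j\<in>{s..<i}. (1 - x j)) * y s"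
    using i
  proof (induction i)
    case 0 then show ?case by simp
  next
    case (Suc i)
    show ?case
    proof (cases "s \<le> i")
      case False then have "s = Suc i" using Suc by simp
      then show ?thesis by simp
    next
      case True
      have IH: "y i \<ge> (\<Prod>j\<in>{s..<i}. (1 - x j)) * y s" using Suc True by simp
      have xi: "0 \<le> x i" "x i \<le> 1" using x[of i] True Suc by auto
      have "y (Suc i) \<ge> (1 - x i) * y i" using step[of i] True Suc by auto
      also have "(1 - x i) * y i \<ge> (1 - x i) * ((\<Prod>j\<in>{s..<i}. (1 - x j)) * y s)"
        using IH xi by (intro mult_left_mono) auto
      finally show ?thesis using True by (simp add: prod.atLeastLessThan_Suc algebra_simps)
    qed
  qed
  moreover have "(\<Prod>j\<in>{s..<i}. (1 - x j)) \<ge> 1 - (\<Sum>j\<in>{s..<i}. x j)"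
    by (rule prod_one_minus_ge) (use x i in auto)
  moreover have "(\<Sum>j\<in>{s..<i}. x j) \<le> (\<Sum>j\<in>{s..<e}. x j)"
    by (rule sum_mono2) (use x i in auto)
  ultimately have "(\<Prod>j\<in>{s..<i}. (1 - x j)) \<ge> 1 - (\<Sum>j\<in>{s..<e}. x j)" and
    "y i \<ge> (\<Prod>j\<in>{s..<i}. (1 - x j)) * y s" by linarith+
  then show ?thesis using mult_right_mono[OF _ y0[of s], of "1 - (\<Sum>j\<in>{s..<e}. x j)" "\<Prod>j\<in>{s..<i}. (1 - x j)"]
    by linarith
qed

lemma contract_seq:
  fixes d P :: "nat \<Rightarrow> real"
  assumes "\<And>k. k \<ge> k0 \<Longrightarrow> d (Suc k) \<ge> P k * d k"
    and "\<And>k. k \<ge> k0 \<Longrightarrow> 0 \<le> P k \<and> P k \<le> \<rho>" and "\<rho> < 1" and "\<gamma> > 0"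
  shows "eventually (\<lambda>k. d k \<ge> - \<gamma>) sequentially"
proof -
  have rho0: "\<rho> \<ge> 0" using assms(2)[of k0] by auto
  have main: "d (k0 + j) \<ge> min 0 (\<rho> ^ j * d k0)" for j
  proof (induction j)
    case 0 then show ?case by simp
  next
    case (Suc j)
    have st: "d (k0 + Suc j) \<ge> P (k0 + j) * d (k0 + j)" using assms(1)[of "k0 + j"] by simp
    have Pb: "0 \<le> P (k0 + j)" "P (k0 + j) \<le> \<rho>" using assms(2)[of "k0 + j"] by auto
    show ?case
    proof (cases "d (k0 + j) \<ge> 0")
      case True
      then have "P (k0 + j) * d (k0 + j) \<ge> 0" using Pb by simp
      then show ?thesis using st by linarith
    next
      case False
      then have "\<rho> ^ j * d k0 \<le> d (k0 + j)" using Suc by linarith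
      then have "\<rho> * (\<rho> ^ j * d k0) \<le> \<rho> * d (k0 + j)" using rho0 by (rule mult_left_mono)
      moreover have "\<rho> * d (k0 + j) \<le> P (k0 + j) * d (k0 + j)"
        using False Pb by (intro mult_right_mono_neg) auto
      ultimately show ?thesis using st by (simp add: mult.assoc)
    qed
  qed
  have "(\<lambda>j. \<rho> ^ j) \<longlonglongrightarrow> 0"
    by (rule LIMSEQ_power_zero) (use rho0 assms(3) in auto)
  then have "(\<lambda>j. \<rho> ^ j * d k0) \<longlonglongrightarrow> 0" by (rule tendsto_mult_left_zero)
  then have "eventually (\<lambda>j. dist (\<rho> ^ j * d k0) 0 < \<gamma>) sequentially"
    using assms(4) by (rule tendstoD)
  then have "eventually (\<lambda>j. \<bar>\<rho> ^ j * d k0\<bar> < \<gamma>) sequentially"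
    by (simp add: dist_real_def)
  then obtain J where J: "\<And>j. j \<ge> J \<Longrightarrow> \<bar>\<rho> ^ j * d k0\<bar> < \<gamma>"
    by (auto simp: eventually_sequentially)
  show ?thesis unfolding eventually_sequentially
  proof (intro exI allI impI)
    fix k assume "k \<ge> k0 + J"
    define j where "j = k - k0"
    have j: "k = k0 + j" "j \<ge> J" using \<open>k \<ge> k0 + J\<close> by (auto simp: j_def)
    show "d k \<ge> - \<gamma>" using main[of j] J[OF j(2)] j(1) assms(4) by auto
  qed
qed

lemma block_cover:
  fixes b :: "nat \<Rightarrow> nat"
  assumes b: "strict_mono b" and i: "b k3 \<le> i"
  shows "\<exists>k\<ge>k3. b k \<le> i \<and> i < b (Suc k)"
proof -
  have ex: "\<exists>k. i < b k" using seq_suble[OF b, of "Suc i"] by (intro exI[of _ "Suc i"]) simp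
  define m where "m = (LEAST k. i < b k)"
  have m: "i < b m" unfolding m_def using ex by (rule LeastI_ex)
  have mmin: "\<And>k. i < b k \<Longrightarrow> m \<le> k" unfolding m_def by (rule Least_le)
  have "b 0 \<le> b k3" using b by (simp add: strict_mono_less_eq)
  then have "m \<noteq> 0" using m i by (cases m) auto
  then obtain k where k: "m = Suc k" by (cases m) auto
  have "\<not> i < b k" using mmin[of k] k by auto
  moreover have "k \<ge> k3"
  proof (rule ccontr)
    assume "\<not> k \<ge> k3"
    then have "Suc k \<le> k3" by simp
    then have "b (Suc k) \<le> b k3" using b by (simp add: strict_mono_less_eq)
    then show False using m k i by simp
  qed
  ultimately show ?thesis using m k by auto
qed

lemma nonsummable_blocks:
  fixes lr :: "nat \<Rightarrow> real"
  assumes nn: "\<And>i. 0 \<le> lr i" and ns: "\<not> summable lr" and B: "B > 0"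
  shows "\<exists>e>s. (\<Sum>i\<in>{s..<e}. lr i) \<ge> B"
proof -
  have "\<exists>e. (\<Sum>i<e. lr i) > B + (\<Sum>i<s. lr i)"
  proof (rule ccontr)
    assume "\<not> ?thesis"
    then have "\<And>e. (\<Sum>i<e. lr i) \<le> B + (\<Sum>i<s. lr i)" by (simp add: not_less)
    then have "summable lr" by (intro summableI_nonneg_bounded[OF nn]) auto
    then show False using ns by simp
  qed
  then obtain e where e: "(\<Sum>i<e. lr i) > B + (\<Sum>i<s. lr i)" by blast
  have "s < e"
  proof (rule ccontr)
    assume "\<not> s < e"
    then have "(\<Sum>i<e. lr i) \<le> (\<Sum>i<s. lr i)" by (intro sum_mono2) (use nn in auto)
    then show False using e B by linarith
  qed
  moreover have "(\<Sum>i\<in>{s..<e}. lr i) = (\<Sum>i<e. lr i) - (\<Sum>i<s. lr i)"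
    using sum_diff_nat_ivl[of 0 s e lr] \<open>s < e\<close> by (simp add: atLeast0LessThan)
  ultimately show ?thesis using e by (intro exI[of _ e]) auto
qed

lemma pmf_integrable_bounded:
  fixes f :: "'b \<Rightarrow> real"
  assumes "\<And>x. \<bar>f x\<bar> \<le> B"
  shows "integrable (measure_pmf D) f"
  by (rule measure_pmf.integrable_const_bound[where B=B]) (use assms in auto)

lemma core:
  fixes D :: "'b pmf" and u z :: "'b \<Rightarrow> real" and lr :: "nat \<Rightarrow> real" and K \<epsilon> :: real
  assumes u: "\<And>x. 0 \<le> u x \<and> u x \<le> 1" and z: "\<And>x. 0 \<le> z x \<and> z x \<le> K"
    and lr_range: "\<And>i. 0 \<le> lr i \<and> lr i \<le> 1"
    and lr_sum: "\<not> summable lr" and lr_sq: "summable (\<lambda>i. (lr i)\<^sup>2)"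
    and pu: "measure_pmf.expectation D u > 0" and eps: "\<epsilon> > 0"
  shows "AE \<omega> in PiM UNIV (\<lambda>_::nat. measure_pmf D). \<forall>y T.
     ((\<forall>i. 0 \<le> y i) \<and> (\<forall>i\<ge>T. y (Suc i) \<ge> (1 - lr i * u (\<omega> i)) * y i + lr i * u (\<omega> i) * z (\<omega> i)))
     \<longrightarrow> eventually (\<lambda>i. y i \<ge> measure_pmf.expectation D (\<lambda>x. u x * z x) / measure_pmf.expectation D u - \<epsilon>) sequentially"
proof -
  define pu where "pu = measure_pmf.expectation D u"
  define Euz where "Euz = measure_pmf.expectation D (\<lambda>x. u x * z x)"
  define \<mu> where "\<mu> = Euz / pu"
  have pu0: "pu > 0" using pu by (simp add: pu_def)
  have K0: "K \<ge> 0" using z[of undefined] by auto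
  have int_u: "integrable (measure_pmf D) u" by (rule pmf_integrable_bounded[where B=1]) (use u in auto)
  have uz_b: "0 \<le> u x * z x \<and> u x * z x \<le> K" for x
  proof -
    have "u x * z x \<le> 1 * K" by (rule mult_mono) (use u[of x] z[of x] in auto)
    then show ?thesis using u[of x] z[of x] by simp
  qed
  have int_uz: "integrable (measure_pmf D) (\<lambda>x. u x * z x)"
    by (rule pmf_integrable_bounded[where B=K]) (use uz_b in auto)
  show ?thesis
  proof (cases "\<mu> \<le> \<epsilon>")
    case True
    have le0: "measure_pmf.expectation D (\<lambda>x. u x * z x) / measure_pmf.expectation D u - \<epsilon> \<le> 0"
      using True by (simp add: \<mu>_def Euz_def pu_def)
    show ?thesis by (intro AE_I2 allI impI always_eventually) (auto intro: order_trans[OF le0])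
  next
    case False
    then have mu_gt: "\<mu> > \<epsilon>" by simp
    have Euz_eq: "Euz = \<mu> * pu" using pu0 by (simp add: \<mu>_def)
    have mu_le: "\<mu> \<le> K"
    proof -
      have "Euz \<le> measure_pmf.expectation D (\<lambda>x. K * u x)"
        unfolding Euz_def
      proof (rule integral_mono[OF int_uz])
        show "integrable (measure_pmf D) (\<lambda>x. K * u x)" using int_u by simp
        fix x show "u x * z x \<le> K * u x"
          using mult_left_mono[of "z x" K "u x"] u[of x] z[of x] by (simp add: mult.commute)
      qed
      then have "Euz \<le> K * pu" by (simp add: pu_def)
      then show ?thesis using pu0 by (simp add: \<mu>_def divide_le_eq)
    qed

    define \<eta> where "\<eta> = \<epsilon> / 3"
    define h where "h = min (1/2) (\<epsilon> / (12 * (K + 1)))"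
    define \<mu>' where "\<mu>' = \<mu> - \<epsilon> / 2"
    have eta0: "\<eta> > 0" using eps by (simp add: \<eta>_def)
    have h0: "h > 0" using eps K0 by (simp add: h_def)
    have h_half: "h \<le> 1/2" unfolding h_def by (rule min.cobounded1)
    have hK: "2 * h * K \<le> \<epsilon> / 6"
    proof -
      have "h \<le> \<epsilon> / (12 * (K + 1))" by (simp add: h_def)
      then have "2 * h * K \<le> 2 * (\<epsilon> / (12 * (K + 1))) * K"
        using K0 by (intro mult_right_mono) auto
      also have "\<dots> = (\<epsilon> / 6) * (K / (K + 1))" using K0 by (simp add: field_simps)
      also have "\<dots> \<le> (\<epsilon> / 6) * 1" using K0 eps by (intro mult_left_mono) auto
      finally show ?thesis by simp
    qed
    have "(\<lambda>i. (lr i)\<^sup>2) \<longlonglongrightarrow> 0" using lr_sq by (rule summable_LIMSEQ_zero)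
    then have "(\<lambda>i. sqrt ((lr i)\<^sup>2)) \<longlonglongrightarrow> sqrt 0" by (rule tendsto_real_sqrt)
    then have "lr \<longlonglongrightarrow> 0" using lr_range by (simp add: real_sqrt_abs)
    then have "eventually (\<lambda>i. dist (lr i) 0 < h) sequentially" using h0 by (rule tendstoD)
    then obtain N0 where N0': "\<And>i. i \<ge> N0 \<Longrightarrow> \<bar>lr i\<bar> < h"
      by (auto simp: eventually_sequentially dist_real_def)
    have N0: "\<And>i. i \<ge> N0 \<Longrightarrow> lr i \<le> h" using N0' by fastforce
    have lr_nn: "\<And>i. 0 \<le> lr i" using lr_range by auto
    define nxt where "nxt = (\<lambda>s. LEAST e. s < e \<and> h \<le> (\<Sum>i\<in>{s..<e}. lr i))"
    have nxt_ex: "\<exists>e. s < e \<and> h \<le> (\<Sum>i\<in>{s..<e}. lr i)" for s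
      using nonsummable_blocks[OF lr_nn lr_sum h0, of s] by auto
    have nxt1: "s < nxt s \<and> h \<le> (\<Sum>i\<in>{s..<nxt s}. lr i)" for s
      unfolding nxt_def by (rule LeastI_ex[OF nxt_ex])
    have nxt2: "(\<Sum>i\<in>{s..<nxt s}. lr i) \<le> 2 * h" if s: "s \<ge> N0" for s
    proof -
      define e where "e = nxt s"
      have se: "s < e" using nxt1[of s] by (simp add: e_def)
      then obtain e' where e': "e = Suc e'" "s \<le> e'" by (cases e) auto
      have a: "(\<Sum>i\<in>{s..<e'}. lr i) \<le> h"
      proof (cases "s < e'")
        case True
        have "\<not> (s < e' \<and> h \<le> (\<Sum>i\<in>{s..<e'}. lr i))"
          unfolding nxt_def by (rule not_less_Least) (use e' in \<open>simp add: e_def nxt_def\<close>)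
        then show ?thesis using True by simp
      next
        case False
        then have "e' = s" using e' by simp
        then show ?thesis using h0 by simp
      qed
      have "lr e' \<le> h" using N0 e' s by simp
      then show ?thesis using a e' by (simp add: e_def[symmetric] sum.atLeastLessThan_Suc)
    qed
    define b where "b = rec_nat N0 (\<lambda>_ s. nxt s)"
    have b0: "b 0 = N0" and bS: "\<And>k. b (Suc k) = nxt (b k)" by (simp_all add: b_def)
    have b_mono: "strict_mono b" unfolding strict_mono_Suc_iff using nxt1 bS by simp
    have bN0: "b k \<ge> N0" for k using b_mono b0 by (metis le0 strict_mono_less_eq)
    define \<Lambda> where "\<Lambda> = (\<lambda>k. \<Sum>i\<in>{b k..<b (Suc k)}. lr i)"
    have Lam_lo: "\<Lambda> k \<ge> h" for k using nxt1[of "b k"] by (simp add: \<Lambda>_def bS)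
    have Lam_hi: "\<Lambda> k \<le> 2 * h" for k using nxt2[OF bN0[of k]] by (simp add: \<Lambda>_def bS)
    define g1 where "g1 = (\<lambda>x. u x * (z x - \<mu> + \<eta>))"
    have mu0: "\<mu> \<ge> 0" using mu_gt eps by simp
    have g1b: "\<bar>g1 x\<bar> \<le> K + \<mu> + \<eta> + 1" for x
    proof -
      have "\<bar>z x - \<mu> + \<eta>\<bar> \<le> K + \<mu> + \<eta>" using z[of x] mu0 eta0 by (auto simp: abs_le_iff)
      then have "\<bar>u x\<bar> * \<bar>z x - \<mu> + \<eta>\<bar> \<le> 1 * (K + \<mu> + \<eta>)"
        using u[of x] by (intro mult_mono) auto
      then show ?thesis by (simp add: g1_def abs_mult)
    qed
    have Eg1: "measure_pmf.expectation D g1 = \<eta> * pu"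
    proof -
      have "g1 = (\<lambda>x. u x * z x - (\<mu> - \<eta>) * u x)" by (auto simp: g1_def algebra_simps)
      then have "measure_pmf.expectation D g1 = Euz - (\<mu> - \<eta>) * pu"
        using int_u int_uz by (simp add: Euz_def pu_def)
      then show ?thesis using Euz_eq by (simp add: algebra_simps)
    qed
    have ev1: "AE \<omega> in PiM UNIV (\<lambda>_::nat. measure_pmf D). eventually (\<lambda>k.
      (\<Sum>i\<in>{b k..<b (Suc k)}. lr i * g1 (\<omega> i)) >
      (\<Sum>i\<in>{b k..<b (Suc k)}. lr i) * (measure_pmf.expectation D g1 - \<eta> * pu)) sequentially"
      by (rule block_concentration[OF g1b _ lr_nn lr_sq b_mono _ h0])
         (use mu0 eta0 K0 Lam_lo pu0 in \<open>auto simp: \<Lambda>_def\<close>)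
    have ev2: "AE \<omega> in PiM UNIV (\<lambda>_::nat. measure_pmf D). eventually (\<lambda>k.
      (\<Sum>i\<in>{b k..<b (Suc k)}. lr i * u (\<omega> i)) >
      (\<Sum>i\<in>{b k..<b (Suc k)}. lr i) * (measure_pmf.expectation D u - pu / 2)) sequentially"
    proof (rule block_concentration[where R=2, OF _ _ lr_nn lr_sq b_mono _ h0])
      show "\<bar>u x\<bar> \<le> 2" for x using u[of x] by auto
    qed (use Lam_lo pu0 in \<open>auto simp: \<Lambda>_def\<close>)
    show ?thesis
      using ev1 ev2
    proof (eventually_elim)
      case (elim \<omega>)
      from elim(1) obtain N1 where N1: "\<And>k. k \<ge> N1 \<Longrightarrow> (\<Sum>i\<in>{b k..<b (Suc k)}. lr i * g1 (\<omega> i)) >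
          (\<Sum>i\<in>{b k..<b (Suc k)}. lr i) * (measure_pmf.expectation D g1 - \<eta> * pu)"
        unfolding eventually_sequentially by blast
      from elim(2) obtain N2 where N2: "\<And>k. k \<ge> N2 \<Longrightarrow> (\<Sum>i\<in>{b k..<b (Suc k)}. lr i * u (\<omega> i)) >
          (\<Sum>i\<in>{b k..<b (Suc k)}. lr i) * (measure_pmf.expectation D u - pu / 2)"
        unfolding eventually_sequentially by blast
      define k1 where "k1 = max N1 N2"
      have k1a: "(\<Sum>i\<in>{b k..<b (Suc k)}. lr i * g1 (\<omega> i)) > 0" if "k \<ge> k1" for k
        using N1[of k] that by (simp add: k1_def Eg1)
      have k1b: "(\<Sum>i\<in>{b k..<b (Suc k)}. lr i * u (\<omega> i)) > \<Lambda> k * (pu / 2)" if "k \<ge> k1" for k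
        using N2[of k] that by (simp add: k1_def \<Lambda>_def pu_def[symmetric])
      show ?case
      proof (intro allI impI)
        fix y :: "nat \<Rightarrow> real" and T :: nat
        assume H: "(\<forall>i. 0 \<le> y i) \<and> (\<forall>i\<ge>T. y (Suc i) \<ge> (1 - lr i * u (\<omega> i)) * y i + lr i * u (\<omega> i) * z (\<omega> i))"
        have y0: "\<And>i. 0 \<le> y i" using H by auto
        define U where "U = (\<lambda>j. lr j * u (\<omega> j))"
        define zz where "zz = (\<lambda>j. z (\<omega> j))"
        have st: "\<And>i. i \<ge> T \<Longrightarrow> y (Suc i) \<ge> (1 - U i) * y i + U i * zz i"
          using H by (simp add: U_def zz_def)
        have U01: "0 \<le> U j \<and> U j \<le> 1" for j
        proof -
          have "lr j * u (\<omega> j) \<le> 1 * 1" using lr_range[of j] u[of "\<omega> j"] by (intro mult_mono) auto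
          then show ?thesis using lr_range[of j] u[of "\<omega> j"] by (simp add: U_def)
        qed
        have Ulr: "U j \<le> lr j" for j
          using mult_left_mono[of "u (\<omega> j)" 1 "lr j"] lr_range[of j] u[of "\<omega> j"] by (simp add: U_def)
        have zz0: "0 \<le> zz j" for j using z by (simp add: zz_def)
        define k2 where "k2 = max k1 T"
        have bT: "b k \<ge> T" if "k \<ge> k2" for k
          using seq_suble[OF b_mono, of k] that by (simp add: k2_def)
        define Pk where "Pk = (\<lambda>k. \<Prod>j\<in>{b k..<b (Suc k)}. (1 - U j))"
        define \<rho> where "\<rho> = exp (- (h * pu / 2))"
        have rho1: "\<rho> < 1" using h0 pu0 by (simp add: \<rho>_def)
        have mu'0: "\<mu>' > 0" using mu_gt eps by (simp add: \<mu>'_def)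
        have blk: "y (b (Suc k)) - \<mu>' \<ge> Pk k * (y (b k) - \<mu>') \<and> 0 \<le> Pk k \<and> Pk k \<le> \<rho>"
          if k: "k \<ge> k2" for k
        proof -
          define s where "s = b k"
          define e where "e = b (Suc k)"
          define LU where "LU = (\<Sum>j\<in>{s..<e}. U j)"
          define SZ where "SZ = (\<Sum>j\<in>{s..<e}. U j * zz j)"
          define P where "P = (\<Prod>j\<in>{s..<e}. (1 - U j))"
          have se: "s \<le> e" using b_mono by (simp add: s_def e_def strict_mono_less_eq)
          have bs: "y e \<ge> P * y s + (1 - LU) * SZ" unfolding P_def LU_def SZ_def
            by (rule blockstep) (use U01 zz0 st bT[OF k] se in \<open>auto simp: s_def\<close>)
          have LU_le: "LU \<le> \<Lambda> k" unfolding LU_def \<Lambda>_def s_def e_def by (rule sum_mono) (rule Ulr)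
          have kk1: "k \<ge> k1" using k by (simp add: k2_def)
          have LUeq: "LU = (\<Sum>i\<in>{b k..<b (Suc k)}. lr i * u (\<omega> i))" by (simp add: LU_def U_def s_def e_def)
          have LU_lo: "LU > \<Lambda> k * (pu / 2)" using k1b[OF kk1] unfolding LUeq .
          have LU0: "LU \<ge> 0" unfolding LU_def by (rule sum_nonneg) (use U01 in auto)
          have LU2h: "LU \<le> 2 * h" using LU_le Lam_hi[of k] by simp
          have g1sum: "(\<Sum>i\<in>{s..<e}. lr i * g1 (\<omega> i)) = SZ - (\<mu> - \<eta>) * LU"
          proof -
            have "\<And>i. lr i * g1 (\<omega> i) = U i * zz i - (\<mu> - \<eta>) * U i"
              by (simp add: g1_def U_def zz_def algebra_simps)
            then show ?thesis by (simp add: SZ_def LU_def sum_subtractf sum_distrib_left)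
          qed
          have SZ_lo: "SZ \<ge> (\<mu> - \<eta>) * LU" using k1a[OF kk1] g1sum by (simp add: s_def e_def)
          have P_lo: "P \<ge> 1 - LU" unfolding P_def LU_def by (rule prod_one_minus_ge) (use U01 in auto)
          have P0: "P \<ge> 0" unfolding P_def by (rule prod_nonneg) (use U01 in auto)
          have P_hi: "P \<le> \<rho>"
          proof -
            have "P \<le> exp (- LU)" unfolding P_def LU_def by (rule prod_one_minus_le_exp) (use U01 in auto)
            also have "exp (- LU) \<le> \<rho>" unfolding \<rho>_def
            proof -
              have "h * pu / 2 \<le> \<Lambda> k * (pu / 2)" using Lam_lo[of k] pu0 by (simp add: mult_right_mono)
              then show "exp (- LU) \<le> exp (- (h * pu / 2))" using LU_lo by simp
            qed
            finally show ?thesis .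
          qed
          have mueta: "\<mu> - \<eta> > 0" using mu_gt eps by (simp add: \<eta>_def)
          have oneLU: "1 - LU \<ge> 0" using LU2h h_half by simp
          have c1: "(1 - LU) * SZ \<ge> (1 - LU) * ((\<mu> - \<eta>) * LU)"
            by (rule mult_left_mono[OF SZ_lo oneLU])
          have c2: "(1 - LU) * (\<mu> - \<eta>) \<ge> \<mu>'"
          proof -
            have "LU * (\<mu> - \<eta>) \<le> (2 * h) * K"
              using LU2h mu_le eta0 LU0 mueta h0 by (intro mult_mono) auto
            then have "(1 - LU) * (\<mu> - \<eta>) \<ge> (\<mu> - \<eta>) - 2 * h * K" by (simp add: algebra_simps)
            then show ?thesis using hK by (simp add: \<mu>'_def \<eta>_def)
          qed
          have c3: "(1 - LU) * ((\<mu> - \<eta>) * LU) \<ge> \<mu>' * LU"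
            using mult_right_mono[OF c2 LU0] by (simp add: mult.assoc)
          have c4: "\<mu>' * LU \<ge> \<mu>' * (1 - P)"
            using mult_left_mono[of "1 - P" LU \<mu>'] P_lo mu'0 by simp
          have "y e \<ge> P * y s + \<mu>' * (1 - P)" using bs c1 c3 c4 by linarith
          then have "y e - \<mu>' \<ge> P * (y s - \<mu>')" by (simp add: algebra_simps)
          then show ?thesis using P0 P_hi by (simp add: Pk_def P_def s_def e_def)
        qed
        have "eventually (\<lambda>k. y (b k) - \<mu>' \<ge> - (\<epsilon> / 6)) sequentially"
          by (rule contract_seq[of k2 Pk _ \<rho>]) (use blk rho1 eps in auto)
        then obtain k3' where k3': "\<And>k. k \<ge> k3' \<Longrightarrow> y (b k) - \<mu>' \<ge> - (\<epsilon> / 6)"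
          by (auto simp: eventually_sequentially)
        define k3 where "k3 = max k3' k2"
        have "\<forall>i\<ge>b k3. y i \<ge> \<mu> - \<epsilon>"
        proof (intro allI impI)
          fix i assume i: "b k3 \<le> i"
          obtain k where k: "k \<ge> k3" "b k \<le> i" "i < b (Suc k)" using block_cover[OF b_mono i] by blast
          have kk: "k \<ge> k2" "k \<ge> k3'" using k by (auto simp: k3_def)
          have wb: "y i \<ge> (1 - (\<Sum>j\<in>{b k..<b (Suc k)}. lr j)) * y (b k)"
          proof (rule within_block)
            show "\<And>j. j \<in> {b k..<b (Suc k)} \<Longrightarrow> 0 \<le> lr j \<and> lr j \<le> 1" using lr_range by auto
            show "\<And>j. 0 \<le> y j" by (rule y0)
            show "y (Suc j) \<ge> (1 - lr j) * y j" if j: "j \<in> {b k..<b (Suc k)}" for j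
            proof -
              have jT: "j \<ge> T" using bT[OF kk(1)] j by auto
              have "(1 - lr j) * y j \<le> (1 - U j) * y j" using Ulr[of j] y0[of j] by (intro mult_right_mono) auto
              moreover have "0 \<le> U j * zz j" using U01[of j] zz0[of j] by simp
              ultimately show ?thesis using st[OF jT] by linarith
            qed
          qed (use k in auto)
          have ybk: "y (b k) \<ge> \<mu> - 2 * \<epsilon> / 3" using k3'[OF kk(2)] by (simp add: \<mu>'_def)
          have L1: "1 - \<Lambda> k \<ge> 1 - 2 * h" using Lam_hi[of k] by simp
          have L0: "1 - 2 * h \<ge> 0" using h_half by simp
          have pos: "\<mu> - 2 * \<epsilon> / 3 \<ge> 0" using mu_gt eps by simp
          have f1: "(1 - \<Lambda> k) * y (b k) \<ge> (1 - 2 * h) * (\<mu> - 2 * \<epsilon> / 3)"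
            using L1 L0 ybk pos by (intro mult_mono) auto
          have "2 * h * (\<mu> - 2 * \<epsilon> / 3) \<le> 2 * h * K"
            using mu_le eps h0 by (intro mult_left_mono) auto
          moreover have "(1 - 2 * h) * (\<mu> - 2 * \<epsilon> / 3) = (\<mu> - 2 * \<epsilon> / 3) - 2 * h * (\<mu> - 2 * \<epsilon> / 3)"
            by (simp add: left_diff_distrib)
          ultimately have "(1 - 2 * h) * (\<mu> - 2 * \<epsilon> / 3) \<ge> \<mu> - \<epsilon>"
            using hK eps by linarith
          then show "y i \<ge> \<mu> - \<epsilon>" using wb f1 by (simp add: \<Lambda>_def)
        qed
        then show "eventually (\<lambda>i. y i \<ge> measure_pmf.expectation D (\<lambda>x. u x * z x) / measure_pmf.expectation D u - \<epsilon>) sequentially"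
          unfolding eventually_sequentially by (auto simp: \<mu>_def Euz_def pu_def)
      qed
    qed
  qed
qed

definition Vmin :: "('q \<Rightarrow> 'a set) \<Rightarrow> ('q \<Rightarrow> 'a \<Rightarrow> real) \<Rightarrow> 'q \<Rightarrow> real" where
  "Vmin A v q = Min (v q ` A q)"

definition Gr :: "('q \<Rightarrow> 'a set) \<Rightarrow> ('q \<Rightarrow> 'a \<Rightarrow> 'q list pmf) \<Rightarrow> ('q \<Rightarrow> 'a \<Rightarrow> real)
    \<Rightarrow> ('q \<Rightarrow> 'a \<Rightarrow> real) \<Rightarrow> 'q \<Rightarrow> 'a \<Rightarrow> real" where
  "Gr A p c v q a = c q a + measure_pmf.expectation (p q a) (\<lambda>\<beta>. \<Sum>j<length \<beta>. Vmin A v (\<beta> ! j))"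

definition vseq where "vseq A p c n = (Gr A p c ^^ n) (\<lambda>_ _. 0)"

lemma vseq_0: "vseq A p c 0 = (\<lambda>_ _. 0)" by (simp add: vseq_def)
lemma vseq_Suc: "vseq A p c (Suc n) = Gr A p c (vseq A p c n)" by (simp add: vseq_def)

lemma Vmin_mono:
  fixes A :: "'q \<Rightarrow> 'a::finite set"
  assumes "A q \<noteq> {}" "\<And>a. a \<in> A q \<Longrightarrow> v q a \<le> w q a"
  shows "Vmin A v q \<le> Vmin A w q"
  unfolding Vmin_def using assms
  by (auto intro!: Min.boundedI simp: Min_le_iff finite)

lemma Vmin_nonneg:
  fixes A :: "'q \<Rightarrow> 'a::finite set"
  assumes "A q \<noteq> {}" "\<And>a. a \<in> A q \<Longrightarrow> 0 \<le> v q a"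
  shows "0 \<le> Vmin A v q"
  unfolding Vmin_def using assms by (auto intro!: Min.boundedI)

lemma Vmin_le:
  fixes A :: "'q \<Rightarrow> 'a::finite set"
  assumes "a \<in> A q"
  shows "Vmin A v q \<le> v q a"
  unfolding Vmin_def using assms by (auto intro!: Min_le)

context
  fixes A :: "'q::finite \<Rightarrow> 'a::finite set" and p :: "'q \<Rightarrow> 'a \<Rightarrow> 'q list pmf" and c :: "'q \<Rightarrow> 'a \<Rightarrow> real"
  assumes bmdp: "is_bmdp A p c"
begin

lemma A_ne: "A q \<noteq> {}" using bmdp by (simp add: is_bmdp_def)
lemma fin_supp: "a \<in> A q \<Longrightarrow> finite (set_pmf (p q a))" using bmdp by (simp add: is_bmdp_def)
lemma c_pos: "a \<in> A q \<Longrightarrow> c q a > 0" using bmdp by (simp add: is_bmdp_def)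

lemma Gr_nonneg:
  assumes v: "\<And>q a. a \<in> A q \<Longrightarrow> 0 \<le> v q a" and a: "a \<in> A q"
  shows "0 \<le> Gr A p c v q a"
proof -
  have "0 \<le> measure_pmf.expectation (p q a) (\<lambda>\<beta>. \<Sum>j<length \<beta>. Vmin A v (\<beta> ! j))"
    by (intro integral_nonneg_AE AE_I2 sum_nonneg Vmin_nonneg A_ne v)
  then show ?thesis using c_pos[OF a] unfolding Gr_def by simp
qed

lemma Gr_mono:
  assumes vw: "\<And>q a. a \<in> A q \<Longrightarrow> v q a \<le> w q a" and a: "a \<in> A q"
  shows "Gr A p c v q a \<le> Gr A p c w q a"
proof -
  have "measure_pmf.expectation (p q a) (\<lambda>\<beta>. \<Sum>j<length \<beta>. Vmin A v (\<beta> ! j))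
     \<le> measure_pmf.expectation (p q a) (\<lambda>\<beta>. \<Sum>j<length \<beta>. Vmin A w (\<beta> ! j))"
    by (intro integral_mono integrable_measure_pmf_finite fin_supp[OF a] sum_mono Vmin_mono A_ne vw)
  then show ?thesis unfolding Gr_def by simp
qed

lemma vseq_nonneg: "a \<in> A q \<Longrightarrow> 0 \<le> vseq A p c n q a"
proof (induction n arbitrary: q a)
  case 0 then show ?case by (simp add: vseq_0)
next
  case (Suc n) then show ?case by (simp add: vseq_Suc Gr_nonneg)
qed

lemma vseq_incr: "a \<in> A q \<Longrightarrow> vseq A p c n q a \<le> vseq A p c (Suc n) q a"
proof (induction n arbitrary: q a)
  case 0 then show ?case using vseq_nonneg[of a q 1] by (simp add: vseq_0)
next
  case (Suc n)
  show ?case unfolding vseq_Suc[of _ _ _ "Suc n"] vseq_Suc[of _ _ _ n]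
    by (rule Gr_mono) (use Suc in \<open>simp_all add: vseq_Suc\<close>)
qed

lemma vseq_mono: "a \<in> A q \<Longrightarrow> m \<le> n \<Longrightarrow> vseq A p c m q a \<le> vseq A p c n q a"
  using lift_Suc_mono_le[of "\<lambda>n. vseq A p c n q a" m n] vseq_incr by blast

end

lemma Min_SUP_commute:
  fixes f :: "nat \<Rightarrow> 'a \<Rightarrow> ennreal"
  assumes S: "finite S" "S \<noteq> {}" and inc: "\<And>a. a \<in> S \<Longrightarrow> incseq (\<lambda>n. f n a)"
  shows "Min ((\<lambda>a. SUP n. f n a) ` S) = (SUP n. Min ((\<lambda>a. f n a) ` S))"
proof (rule antisym)
  show "(SUP n. Min ((\<lambda>a. f n a) ` S)) \<le> Min ((\<lambda>a. SUP n. f n a) ` S)"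
  proof (rule SUP_least)
    fix n
    show "Min ((\<lambda>a. f n a) ` S) \<le> Min ((\<lambda>a. SUP n. f n a) ` S)"
    proof (rule Min.boundedI)
      show "finite ((\<lambda>a. SUP n. f n a) ` S)" "(\<lambda>a. SUP n. f n a) ` S \<noteq> {}" using S by auto
      fix y assume "y \<in> (\<lambda>a. SUP n. f n a) ` S"
      then obtain a where a: "a \<in> S" "y = (SUP n. f n a)" by auto
      have "Min ((\<lambda>a. f n a) ` S) \<le> f n a" using S a by (intro Min_le) auto
      also have "\<dots> \<le> (SUP n. f n a)" by (rule SUP_upper) simp
      finally show "Min ((\<lambda>a. f n a) ` S) \<le> y" using a by simp
    qed
  qed
next
  show "Min ((\<lambda>a. SUP n. f n a) ` S) \<le> (SUP n. Min ((\<lambda>a. f n a) ` S))"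
  proof (rule dense_le)
    fix x assume x: "x < Min ((\<lambda>a. SUP n. f n a) ` S)"
    then have "\<forall>a\<in>S. \<exists>n. x < f n a" using S by (auto simp: Min_gr_iff less_SUP_iff)
    then obtain g where g: "\<And>a. a \<in> S \<Longrightarrow> x < f (g a) a" by metis
    define N where "N = Max (g ` S)"
    have "x < f N a" if a: "a \<in> S" for a
    proof -
      have "g a \<le> N" using S a by (simp add: N_def)
      then have "f (g a) a \<le> f N a" using inc[OF a] by (simp add: incseq_def)
      then show ?thesis using g[OF a] by simp
    qed
    then have "x < Min ((\<lambda>a. f N a) ` S)" using S by (simp add: Min_gr_iff)
    also have "\<dots> \<le> (SUP n. Min ((\<lambda>a. f n a) ` S))" by (rule SUP_upper) simp
    finally show "x \<le> (SUP n. Min ((\<lambda>a. f n a) ` S))" by simp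
  qed
qed

definition Wf where "Wf A p c q a = (SUP n. ennreal (vseq A p c n q a))"
definition Vw where "Vw A p c q = Min ((Wf A p c q) ` A q)"

lemma sum_list_map_nth: "sum_list (map f xs) = (\<Sum>j<length xs. f (xs ! j))"
  using sum_list_sum_nth[of "map f xs"] by (simp add: atLeast0LessThan)

context
  fixes A :: "'q::finite \<Rightarrow> 'a::finite set" and p :: "'q \<Rightarrow> 'a \<Rightarrow> 'q list pmf" and c :: "'q \<Rightarrow> 'a \<Rightarrow> real"
  assumes bmdp: "is_bmdp A p c"
begin

lemma Vmin_vseq_incseq: "incseq (\<lambda>n. Vmin A (vseq A p c n) q)"
  unfolding incseq_def
  by (auto intro!: Vmin_mono A_ne[OF bmdp] vseq_mono[OF bmdp])

lemma Vmin_vseq_nonneg: "0 \<le> Vmin A (vseq A p c n) q"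
  by (intro Vmin_nonneg A_ne[OF bmdp] vseq_nonneg[OF bmdp])

lemma Vw_SUP: "Vw A p c q = (SUP n. ennreal (Vmin A (vseq A p c n) q))"
proof -
  have fin: "finite (A q)" "A q \<noteq> {}" using A_ne[OF bmdp] by auto
  have "Vw A p c q = Min ((\<lambda>a. SUP n. ennreal (vseq A p c n q a)) ` A q)"
    by (simp add: Vw_def Wf_def)
  also have "\<dots> = (SUP n. Min ((\<lambda>a. ennreal (vseq A p c n q a)) ` A q))"
    by (rule Min_SUP_commute[OF fin]) (auto simp: incseq_def intro!: ennreal_leI vseq_mono[OF bmdp])
  also have "\<dots> = (SUP n. ennreal (Vmin A (vseq A p c n) q))"
  proof (rule SUP_cong[OF refl])
    fix n
    have "ennreal (Min (vseq A p c n q ` A q)) = Min (ennreal ` (vseq A p c n q ` A q))"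
      by (rule mono_Min_commute) (use fin in \<open>auto simp: mono_def ennreal_leI\<close>)
    then show "Min ((\<lambda>a. ennreal (vseq A p c n q a)) ` A q) = ennreal (Vmin A (vseq A p c n) q)"
      by (simp add: Vmin_def image_image)
  qed
  finally show ?thesis .
qed

lemma ennreal_Gr_vseq:
  assumes a: "a \<in> A q"
  shows "ennreal (Gr A p c (vseq A p c n) q a) =
    ennreal (c q a) + (\<integral>\<^sup>+\<beta>. (\<Sum>j<length \<beta>. ennreal (Vmin A (vseq A p c n) (\<beta> ! j))) \<partial>measure_pmf (p q a))"
proof -
  define F where "F = (\<lambda>\<beta>. \<Sum>j<length \<beta>. Vmin A (vseq A p c n) (\<beta> ! j))"
  have F0: "\<And>\<beta>. 0 \<le> F \<beta>" unfolding F_def by (intro sum_nonneg Vmin_vseq_nonneg)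
  have "(\<integral>\<^sup>+\<beta>. ennreal (F \<beta>) \<partial>measure_pmf (p q a)) = ennreal (measure_pmf.expectation (p q a) F)"
    by (rule nn_integral_eq_integral) (use F0 integrable_measure_pmf_finite[OF fin_supp[OF bmdp a]] in auto)
  moreover have "(\<Sum>j<length \<beta>. ennreal (Vmin A (vseq A p c n) (\<beta> ! j))) = ennreal (F \<beta>)" for \<beta>
    unfolding F_def by (rule sum_ennreal) (rule Vmin_vseq_nonneg)
  moreover have "0 \<le> measure_pmf.expectation (p q a) F" by (rule integral_nonneg_AE) (use F0 in auto)
  ultimately show ?thesis using c_pos[OF bmdp a]
    by (simp add: Gr_def F_def[symmetric])
qed

lemma claimF:
  assumes a: "a \<in> A q"
  shows "ennreal (c q a) + (\<integral>\<^sup>+\<beta>. (\<Sum>j<length \<beta>. Vw A p c (\<beta> ! j)) \<partial>measure_pmf (p q a)) \<le> Wf A p c q a"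
proof -
  define X where "X = (\<lambda>n \<beta>. \<Sum>j<length \<beta>. ennreal (Vmin A (vseq A p c n) (\<beta> ! j)))"
  have incX: "incseq X"
    unfolding X_def incseq_def le_fun_def
    by (auto intro!: sum_mono ennreal_leI Vmin_vseq_incseq[THEN incseqD])
  have "(\<lambda>\<beta>. \<Sum>j<length \<beta>. Vw A p c (\<beta> ! j)) = (\<lambda>\<beta>. SUP n. X n \<beta>)"
  proof
    fix \<beta> :: "'q list"
    have "(\<Sum>j<length \<beta>. Vw A p c (\<beta> ! j)) = (\<Sum>j<length \<beta>. SUP n. ennreal (Vmin A (vseq A p c n) (\<beta> ! j)))"
      by (simp add: Vw_SUP)
    also have "\<dots> = (SUP n. X n \<beta>)" unfolding X_def
      by (rule ennreal_SUP_sum[symmetric])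
         (auto simp: incseq_def intro!: ennreal_leI Vmin_vseq_incseq[THEN incseqD])
    finally show "(\<Sum>j<length \<beta>. Vw A p c (\<beta> ! j)) = (SUP n. X n \<beta>)" .
  qed
  then have "(\<integral>\<^sup>+\<beta>. (\<Sum>j<length \<beta>. Vw A p c (\<beta> ! j)) \<partial>measure_pmf (p q a)) =
      (SUP n. \<integral>\<^sup>+\<beta>. X n \<beta> \<partial>measure_pmf (p q a))"
    using nn_integral_monotone_convergence_SUP[OF incX, of "measure_pmf (p q a)"] by simp
  then have "ennreal (c q a) + (\<integral>\<^sup>+\<beta>. (\<Sum>j<length \<beta>. Vw A p c (\<beta> ! j)) \<partial>measure_pmf (p q a)) =
      (SUP n. ennreal (c q a) + \<integral>\<^sup>+\<beta>. X n \<beta> \<partial>measure_pmf (p q a))"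
    by (simp add: ennreal_SUP_add_right)
  also have "\<dots> = (SUP n. ennreal (vseq A p c (Suc n) q a))"
    by (simp add: vseq_Suc ennreal_Gr_vseq[OF a] X_def)
  also have "\<dots> \<le> Wf A p c q a" unfolding Wf_def
    by (rule SUP_least) (rule SUP_upper, simp)
  finally show ?thesis .
qed

end

context
  fixes A :: "'q::finite \<Rightarrow> 'a::finite set" and p :: "'q \<Rightarrow> 'a \<Rightarrow> 'q list pmf" and c :: "'q \<Rightarrow> 'a \<Rightarrow> real"
  assumes bmdp: "is_bmdp A p c"
begin

definition amin where "amin q = (SOME a. a \<in> A q \<and> Wf A p c q a = Vw A p c q)"

lemma amin: "amin q \<in> A q \<and> Wf A p c q (amin q) = Vw A p c q"
proof -
  have "Vw A p c q \<in> Wf A p c q ` A q" unfolding Vw_def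
    by (rule Min_in) (use A_ne[OF bmdp] in auto)
  then have "\<exists>a. a \<in> A q \<and> Wf A p c q a = Vw A p c q" by auto
  then show ?thesis unfolding amin_def by (rule someI_ex)
qed

definition \<sigma>g :: "('q,'a) strategy" where "\<sigma>g h \<alpha> = return_pmf (0, amin (\<alpha> ! 0))"

lemma \<sigma>g_strat: "\<sigma>g \<in> strategies A"
  unfolding strategies_def \<sigma>g_def using amin by auto

lemma ncost_bound: "ncost p c \<sigma>g n h \<alpha> \<le> sum_list (map (Vw A p c) \<alpha>)"
proof (induction n arbitrary: h \<alpha>)
  case 0 then show ?case by simp
next
  case (Suc n)
  show ?case
  proof (cases "\<alpha> = []")
    case True then show ?thesis by simp
  next
    case False
    define q where "q = \<alpha> ! 0"
    define a where "a = amin q"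
    have a: "a \<in> A q" "Wf A p c q a = Vw A p c q" using amin[of q] by (auto simp: a_def)
    have \<alpha>eq: "\<alpha> = q # tl \<alpha>" using False by (cases \<alpha>) (auto simp: q_def)
    have rep: "replace_at \<alpha> 0 \<beta> = \<beta> @ tl \<alpha>" for \<beta> by (simp add: replace_at_def drop_Suc)
    define R where "R = sum_list (map (Vw A p c) (tl \<alpha>))"
    have "ncost p c \<sigma>g (Suc n) h \<alpha> = ennreal (c q a) +
        (\<integral>\<^sup>+\<beta>. ncost p c \<sigma>g n (h @ [(\<alpha>, (0, a))]) (\<beta> @ tl \<alpha>) \<partial>measure_pmf (p q a))"
      using False by (simp add: \<sigma>g_def q_def a_def rep)
    also have "\<dots> \<le> ennreal (c q a) + (\<integral>\<^sup>+\<beta>. (sum_list (map (Vw A p c) \<beta>) + R) \<partial>measure_pmf (p q a))"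
    proof (intro add_left_mono nn_integral_mono)
      fix \<beta> :: "'q list"
      show "ncost p c \<sigma>g n (h @ [(\<alpha>, (0, a))]) (\<beta> @ tl \<alpha>) \<le> sum_list (map (Vw A p c) \<beta>) + R"
        using Suc.IH[of "h @ [(\<alpha>, (0, a))]" "\<beta> @ tl \<alpha>"] by (simp add: R_def)
    qed
    also have "(\<integral>\<^sup>+\<beta>. (sum_list (map (Vw A p c) \<beta>) + R) \<partial>measure_pmf (p q a)) =
        (\<integral>\<^sup>+\<beta>. sum_list (map (Vw A p c) \<beta>) \<partial>measure_pmf (p q a)) + R"
      by (subst nn_integral_add) (simp_all add: measure_pmf.emeasure_space_1)
    also have "ennreal (c q a) + ((\<integral>\<^sup>+\<beta>. sum_list (map (Vw A p c) \<beta>) \<partial>measure_pmf (p q a)) + R)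
        = (ennreal (c q a) + (\<integral>\<^sup>+\<beta>. (\<Sum>j<length \<beta>. Vw A p c (\<beta> ! j)) \<partial>measure_pmf (p q a))) + R"
      by (simp add: sum_list_map_nth add.assoc)
    also have "\<dots> \<le> Wf A p c q a + R"
      by (intro add_right_mono claimF[OF bmdp a(1)])
    also have "\<dots> = sum_list (map (Vw A p c) \<alpha>)"
      using a(2) by (subst \<alpha>eq) (simp add: R_def)
    finally show ?thesis .
  qed
qed

lemma cstar_le_Vw: "cstar A p c q \<le> Vw A p c q"
proof -
  have "cstar A p c q \<le> total_cost p c \<sigma>g [q]"
    unfolding cstar_def by (rule INF_lower[OF \<sigma>g_strat])
  also have "\<dots> \<le> Vw A p c q"
    unfolding total_cost_def by (rule SUP_least) (use ncost_bound[of _ "[]" "[q]"] in simp)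
  finally show ?thesis .
qed

lemma Qstar_le_Wf: "a \<in> A q \<Longrightarrow> Qstar A p c q a \<le> Wf A p c q a"
  unfolding Qstar_def
  by (rule order_trans[OF _ claimF[OF bmdp]])
     (auto intro!: add_left_mono nn_integral_mono sum_mono cstar_le_Vw)

lemma vseq_unbounded:
  assumes a: "a \<in> A q" and inf: "Qstar A p c q a = \<infinity>"
  shows "\<exists>n. vseq A p c n q a > B"
proof (rule ccontr)
  assume "\<not> ?thesis"
  then have "\<And>n. vseq A p c n q a \<le> B" by (simp add: not_less)
  then have "Wf A p c q a \<le> ennreal B" unfolding Wf_def by (intro SUP_least ennreal_leI) auto
  then have "Qstar A p c q a \<le> ennreal B" using Qstar_le_Wf[OF a] by simp
  then have "(\<infinity>::ennreal) \<le> ennreal B" using inf by simp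
  then show False by (simp add: top_unique)
qed

end

lemma qlearn_Suc_entry:
  "qlearn A c lr Q0 \<omega> (Suc i) q a =
    (if fst (\<omega> i) = (q, a) then
       (1 - lr i) * qlearn A c lr Q0 \<omega> i q a + lr i * (c q a + (\<Sum>j<length (snd (\<omega> i)).
          Min (qlearn A c lr Q0 \<omega> i (snd (\<omega> i) ! j) ` A (snd (\<omega> i) ! j))))
     else qlearn A c lr Q0 \<omega> i q a)"
  by (cases "\<omega> i") (auto simp: Let_def)

lemma qlearn_nonneg:
  fixes A :: "'q::finite \<Rightarrow> 'a::finite set"
  assumes bmdp: "is_bmdp A p c" and lr: "\<And>i. 0 \<le> lr i \<and> lr i \<le> 1"
    and Q0: "\<And>q' a'. a' \<in> A q' \<Longrightarrow> Q0 q' a' \<ge> 0"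
  shows "a \<in> A q \<Longrightarrow> 0 \<le> qlearn A c lr Q0 \<omega> i q a"
proof (induction i arbitrary: q a)
  case 0 then show ?case using Q0 by simp
next
  case (Suc i)
  have Mn: "0 \<le> Min (qlearn A c lr Q0 \<omega> i q' ` A q')" for q'
    using A_ne[OF bmdp, of q'] Suc.IH by (auto intro!: Min.boundedI)
  have "0 \<le> c q a" using c_pos[OF bmdp Suc.prems] by simp
  then have t: "0 \<le> c q a + (\<Sum>j<length (snd (\<omega> i)). Min (qlearn A c lr Q0 \<omega> i (snd (\<omega> i) ! j) ` A (snd (\<omega> i) ! j)))"
    using Mn by (intro add_nonneg_nonneg sum_nonneg) auto
  show ?case
    unfolding qlearn_Suc_entry using Suc.IH[OF Suc.prems] t lr[of i]
    by (auto intro!: add_nonneg_nonneg mult_nonneg_nonneg)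
qed

context
  fixes A :: "'q::finite \<Rightarrow> 'a::finite set"
    and p :: "'q \<Rightarrow> 'a \<Rightarrow> 'q list pmf"
    and c :: "'q \<Rightarrow> 'a \<Rightarrow> real"
    and lr :: "nat \<Rightarrow> real"
    and sel :: "('q \<times> 'a) pmf"
    and pmin :: real
    and Q0 :: "'q \<Rightarrow> 'a \<Rightarrow> real"
  assumes bmdp: "is_bmdp A p c"
    and lr_range: "\<And>i. 0 \<le> lr i \<and> lr i \<le> 1"
    and lr_sum: "\<not> summable lr"
    and lr_sq: "summable (\<lambda>i. (lr i)\<^sup>2)"
    and sel_support: "set_pmf sel \<subseteq> {(q', a'). a' \<in> A q'}"
    and pmin_pos: "pmin > 0"
    and sel_min: "\<And>q' a'. a' \<in> A q' \<Longrightarrow> pmf sel (q', a') \<ge> pmin"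
    and Q0_nonneg: "\<And>q' a'. a' \<in> A q' \<Longrightarrow> Q0 q' a' \<ge> 0"
begin

definition IHP where "IHP n \<omega> \<longleftrightarrow> (\<forall>q' a'. a' \<in> A q' \<longrightarrow> (\<forall>m::nat.
   eventually (\<lambda>i. qlearn A c lr Q0 \<omega> i q' a' \<ge> vseq A p c n q' a' - 1 / real (Suc m)) sequentially))"

lemma E_fin: "finite {(q', a'). a' \<in> A q'}" by simp

lemma sample_expect:
  fixes w :: "('q \<times> 'a) \<times> 'q list \<Rightarrow> real"
  assumes x0: "a0 \<in> A q0"
  shows "measure_pmf.expectation (sample_pmf p sel) (\<lambda>y. (if fst y = (q0, a0) then 1 else 0) * w y)
       = pmf sel (q0, a0) * measure_pmf.expectation (p q0 a0) (\<lambda>\<beta>. w ((q0, a0), \<beta>))"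
proof -
  define E where "E = {(q', a'). a' \<in> A q'}"
  define f where "f = (\<lambda>qa. map_pmf (\<lambda>\<beta>. (qa, \<beta>)) (p (fst qa) (snd qa)))"
  have "measure_pmf.expectation (sample_pmf p sel) (\<lambda>y. (if fst y = (q0, a0) then 1 else 0) * w y)
     = (\<Sum>x\<in>E. pmf sel x *\<^sub>R measure_pmf.expectation (f x) (\<lambda>y. (if fst y = (q0, a0) then 1 else 0) * w y))"
    unfolding sample_pmf_def f_def[symmetric]
  proof (rule pmf_expectation_bind)
    show "finite E" by (simp add: E_def)
    show "set_pmf sel \<subseteq> E" using sel_support by (simp add: E_def)
    fix x assume "x \<in> E"
    then show "finite (set_pmf (f x))" using fin_supp[OF bmdp] by (auto simp: E_def f_def)
  qed
  also have "\<dots> = (\<Sum>x\<in>E. (if x = (q0, a0) then pmf sel (q0, a0) * measure_pmf.expectation (p q0 a0) (\<lambda>\<beta>. w ((q0, a0), \<beta>)) else 0))"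
    by (intro sum.cong refl) (auto simp: f_def)
  also have "\<dots> = pmf sel (q0, a0) * measure_pmf.expectation (p q0 a0) (\<lambda>\<beta>. w ((q0, a0), \<beta>))"
    using x0 by (simp add: E_def)
  finally show ?thesis .
qed

lemma step_pair:
  assumes IH: "AE \<omega> in sample_space p sel. IHP n \<omega>" and x0: "a0 \<in> A q0"
  shows "AE \<omega> in sample_space p sel. eventually (\<lambda>i. qlearn A c lr Q0 \<omega> i q0 a0 \<ge> vseq A p c (Suc n) q0 a0 - 1 / real (Suc m)) sequentially"
proof -
  define D where "D = sample_pmf p sel"
  define \<epsilon> where "\<epsilon> = 1 / real (Suc m)"
  have eps: "\<epsilon> > 0" by (simp add: \<epsilon>_def)
  define v where "v = vseq A p c n"
  define S where "S = set_pmf (p q0 a0)"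
  have finS: "finite S" using fin_supp[OF bmdp x0] by (simp add: S_def)
  have intp: "\<And>f. integrable (measure_pmf (p q0 a0)) (f :: 'q list \<Rightarrow> real)"
    using finS by (intro integrable_measure_pmf_finite) (simp add: S_def)
  define Lb where "Lb = measure_pmf.expectation (p q0 a0) (\<lambda>\<beta>. real (length \<beta>))"
  have Lb0: "Lb \<ge> 0" unfolding Lb_def by (rule integral_nonneg_AE) auto
  define \<delta> where "\<delta> = \<epsilon> / (2 * (Lb + 1))"
  have d0: "\<delta> > 0" using eps Lb0 by (simp add: \<delta>_def)
  have dLb: "\<delta> * Lb \<le> \<epsilon> / 2"
  proof -
    have "\<delta> * Lb = (\<epsilon> / 2) * (Lb / (Lb + 1))" using Lb0 by (simp add: \<delta>_def field_simps)
    also have "\<dots> \<le> (\<epsilon> / 2) * 1" using eps Lb0 by (intro mult_left_mono) auto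
    finally show ?thesis by simp
  qed
  obtain m' where m': "1 / real (Suc m') < \<delta>"
  proof -
    obtain k :: nat where k: "k > 0" "inverse (real k) < \<delta>" using ex_inverse_of_nat_less[OF d0] by auto
    then obtain m' where "k = Suc m'" by (cases k) auto
    then show ?thesis using k that[of m'] by (simp add: inverse_eq_divide)
  qed
  have v0: "\<And>q a. a \<in> A q \<Longrightarrow> 0 \<le> v q a" unfolding v_def by (rule vseq_nonneg[OF bmdp])
  define G where "G = (\<lambda>\<beta>. c q0 a0 + (\<Sum>j<length \<beta>. Vmin A v (\<beta> ! j)))"
  have VM0: "0 \<le> Vmin A v q" for q by (intro Vmin_nonneg A_ne[OF bmdp] v0)
  have G0: "0 \<le> G \<beta>" for \<beta> using c_pos[OF bmdp x0] VM0 by (simp add: G_def sum_nonneg add_nonneg_nonneg)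
  define u where "u = (\<lambda>y :: ('q \<times> 'a) \<times> 'q list. if fst y = (q0, a0) then 1 else (0::real))"
  define z where "z = (\<lambda>y :: ('q \<times> 'a) \<times> 'q list. if snd y \<in> S then max 0 (G (snd y) - \<delta> * real (length (snd y))) else 0)"
  define K where "K = (\<Sum>\<beta>\<in>S. G \<beta>)"
  have zK: "0 \<le> z y \<and> z y \<le> K" for y
  proof (cases "snd y \<in> S")
    case True
    have "G (snd y) \<le> K" unfolding K_def by (rule member_le_sum) (use True finS G0 in auto)
    moreover have "G (snd y) - \<delta> * real (length (snd y)) \<le> G (snd y)" using d0 by simp
    ultimately show ?thesis using True G0[of "snd y"] by (auto simp: z_def)
  next
    case False
    have "0 \<le> K" unfolding K_def by (rule sum_nonneg) (use G0 in auto)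
    then show ?thesis using False by (simp add: z_def)
  qed
  have u01: "0 \<le> u y \<and> u y \<le> 1" for y by (simp add: u_def)
  have Eu: "measure_pmf.expectation D u = pmf sel (q0, a0)"
    using sample_expect[OF x0, of "\<lambda>_. 1"] by (simp add: D_def u_def)
  have Euz: "measure_pmf.expectation D (\<lambda>y. u y * z y) = pmf sel (q0, a0) * measure_pmf.expectation (p q0 a0) (\<lambda>\<beta>. z ((q0, a0), \<beta>))"
    using sample_expect[OF x0, of z] by (simp add: D_def u_def)
  have pos: "pmf sel (q0, a0) > 0" using sel_min[OF x0] pmin_pos by simp
  have mu_eq: "measure_pmf.expectation D (\<lambda>y. u y * z y) / measure_pmf.expectation D u
      = measure_pmf.expectation (p q0 a0) (\<lambda>\<beta>. z ((q0, a0), \<beta>))"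
    using pos by (simp add: Eu Euz)
  have mu_ge: "measure_pmf.expectation (p q0 a0) (\<lambda>\<beta>. z ((q0, a0), \<beta>)) \<ge> vseq A p c (Suc n) q0 a0 - \<epsilon> / 2"
  proof -
    have "measure_pmf.expectation (p q0 a0) (\<lambda>\<beta>. G \<beta> - \<delta> * real (length \<beta>))
        \<le> measure_pmf.expectation (p q0 a0) (\<lambda>\<beta>. z ((q0, a0), \<beta>))"
      by (rule integral_mono_AE[OF intp intp]) (auto simp: AE_measure_pmf_iff z_def S_def)
    moreover have "measure_pmf.expectation (p q0 a0) (\<lambda>\<beta>. G \<beta> - \<delta> * real (length \<beta>))
        = vseq A p c (Suc n) q0 a0 - \<delta> * Lb"
      by (simp add: G_def vseq_Suc Gr_def v_def Lb_def intp measure_pmf.prob_space)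
    ultimately show ?thesis using dLb by simp
  qed
  have core': "AE \<omega> in PiM UNIV (\<lambda>_::nat. measure_pmf D). \<forall>y T.
     ((\<forall>i. 0 \<le> y i) \<and> (\<forall>i\<ge>T. y (Suc i) \<ge> (1 - lr i * u (\<omega> i)) * y i + lr i * u (\<omega> i) * z (\<omega> i)))
     \<longrightarrow> eventually (\<lambda>i. y i \<ge> measure_pmf.expectation D (\<lambda>x. u x * z x) / measure_pmf.expectation D u - \<epsilon> / 2) sequentially"
    by (rule core[OF u01 zK lr_range lr_sum lr_sq]) (use pos eps in \<open>simp_all add: Eu\<close>)
  have "AE \<omega> in sample_space p sel. IHP n \<omega> \<and> (\<forall>y T.
     ((\<forall>i. 0 \<le> y i) \<and> (\<forall>i\<ge>T. y (Suc i) \<ge> (1 - lr i * u (\<omega> i)) * y i + lr i * u (\<omega> i) * z (\<omega> i)))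
     \<longrightarrow> eventually (\<lambda>i. y i \<ge> measure_pmf.expectation D (\<lambda>x. u x * z x) / measure_pmf.expectation D u - \<epsilon> / 2) sequentially)"
    unfolding sample_space_def D_def[symmetric]
    by (rule AE_conjI[OF IH[unfolded sample_space_def D_def[symmetric]] core'])
  then show ?thesis
  proof (rule eventually_mono)
    fix \<omega> assume H: "IHP n \<omega> \<and> (\<forall>y T.
     ((\<forall>i. 0 \<le> y i) \<and> (\<forall>i\<ge>T. y (Suc i) \<ge> (1 - lr i * u (\<omega> i)) * y i + lr i * u (\<omega> i) * z (\<omega> i)))
     \<longrightarrow> eventually (\<lambda>i. y i \<ge> measure_pmf.expectation D (\<lambda>x. u x * z x) / measure_pmf.expectation D u - \<epsilon> / 2) sequentially)"
    define Q where "Q = qlearn A c lr Q0 \<omega>"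
    have "\<forall>x\<in>{(q', a'). a' \<in> A q'}. eventually (\<lambda>i. Q i (fst x) (snd x) \<ge> v (fst x) (snd x) - 1 / real (Suc m')) sequentially"
      using H by (auto simp: IHP_def Q_def v_def)
    then have "eventually (\<lambda>i. \<forall>x\<in>{(q', a'). a' \<in> A q'}. Q i (fst x) (snd x) \<ge> v (fst x) (snd x) - 1 / real (Suc m')) sequentially"
      by (rule eventually_ball_finite[OF E_fin])
    then obtain T where T: "\<And>i q' a'. i \<ge> T \<Longrightarrow> a' \<in> A q' \<Longrightarrow> Q i q' a' \<ge> v q' a' - 1 / real (Suc m')"
      unfolding eventually_sequentially by fastforce
    have Qnn: "\<And>i q' a'. a' \<in> A q' \<Longrightarrow> 0 \<le> Q i q' a'"
      unfolding Q_def by (rule qlearn_nonneg[OF bmdp lr_range Q0_nonneg])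
    define y where "y = (\<lambda>i. Q i q0 a0)"
    have hyp: "(\<forall>i. 0 \<le> y i) \<and> (\<forall>i\<ge>T. y (Suc i) \<ge> (1 - lr i * u (\<omega> i)) * y i + lr i * u (\<omega> i) * z (\<omega> i))"
    proof (intro conjI allI impI)
      fix i show "0 \<le> y i" unfolding y_def by (rule Qnn[OF x0])
    next
      fix i assume iT: "T \<le> i"
      define \<beta> where "\<beta> = snd (\<omega> i)"
      define tgt where "tgt = c q0 a0 + (\<Sum>j<length \<beta>. Min (Q i (\<beta> ! j) ` A (\<beta> ! j)))"
      show "y (Suc i) \<ge> (1 - lr i * u (\<omega> i)) * y i + lr i * u (\<omega> i) * z (\<omega> i)"
      proof (cases "fst (\<omega> i) = (q0, a0)")
        case False
        then show ?thesis unfolding y_def Q_def qlearn_Suc_entry by (simp add: u_def)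
      next
        case True
        have Mn: "Min (Q i q' ` A q') \<ge> Vmin A v q' - \<delta>" for q'
        proof -
          have "\<forall>a'\<in>A q'. Q i q' a' \<ge> Vmin A v q' - \<delta>"
          proof
            fix a' assume a': "a' \<in> A q'"
            have "Q i q' a' \<ge> v q' a' - 1 / real (Suc m')" by (rule T[OF iT a'])
            moreover have "Vmin A v q' \<le> v q' a'" by (rule Vmin_le) (rule a')
            ultimately show "Q i q' a' \<ge> Vmin A v q' - \<delta>" using m' by linarith
          qed
          then show ?thesis using A_ne[OF bmdp, of q'] by (simp add: Min_ge_iff)
        qed
        have Mn0: "Min (Q i q' ` A q') \<ge> 0" for q'
          using A_ne[OF bmdp, of q'] Qnn by (auto intro!: Min.boundedI)
        have t1: "tgt \<ge> G \<beta> - \<delta> * real (length \<beta>)"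
        proof -
          have "(\<Sum>j<length \<beta>. Vmin A v (\<beta> ! j) - \<delta>) \<le> (\<Sum>j<length \<beta>. Min (Q i (\<beta> ! j) ` A (\<beta> ! j)))"
            by (rule sum_mono) (rule Mn)
          then show ?thesis by (simp add: tgt_def G_def sum_subtractf mult.commute)
        qed
        have t0: "tgt \<ge> 0" unfolding tgt_def using c_pos[OF bmdp x0] Mn0
          by (intro add_nonneg_nonneg sum_nonneg) (auto intro: less_imp_le)
        have zt: "z (\<omega> i) \<le> tgt" using t1 t0 by (auto simp: z_def \<beta>_def)
        have "y (Suc i) = (1 - lr i) * y i + lr i * tgt"
          using True unfolding y_def Q_def qlearn_Suc_entry by (simp add: tgt_def \<beta>_def Q_def)
        moreover have "lr i * z (\<omega> i) \<le> lr i * tgt" using zt lr_range[of i] by (intro mult_left_mono) auto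
        ultimately show ?thesis using True by (simp add: u_def)
      qed
    qed
    have "eventually (\<lambda>i. y i \<ge> measure_pmf.expectation D (\<lambda>x. u x * z x) / measure_pmf.expectation D u - \<epsilon> / 2) sequentially"
      using H hyp by blast
    then show "eventually (\<lambda>i. qlearn A c lr Q0 \<omega> i q0 a0 \<ge> vseq A p c (Suc n) q0 a0 - 1 / real (Suc m)) sequentially"
    proof (rule eventually_mono)
      fix i assume that: "y i \<ge> measure_pmf.expectation D (\<lambda>x. u x * z x) / measure_pmf.expectation D u - \<epsilon> / 2"
      show "qlearn A c lr Q0 \<omega> i q0 a0 \<ge> vseq A p c (Suc n) q0 a0 - 1 / real (Suc m)"
      proof -
        have "y i \<ge> vseq A p c (Suc n) q0 a0 - \<epsilon>" using that mu_eq mu_ge by linarith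
        then show ?thesis by (simp add: y_def Q_def \<epsilon>_def)
      qed
    qed
  qed
qed

lemma Qnn_ctx: "a \<in> A q \<Longrightarrow> 0 \<le> qlearn A c lr Q0 \<omega> i q a"
  by (rule qlearn_nonneg[OF bmdp lr_range Q0_nonneg])

lemma IH_all: "AE \<omega> in sample_space p sel. IHP n \<omega>"
proof (induction n)
  case 0
  show ?case
  proof (rule AE_I2)
    fix \<omega>
    show "IHP 0 \<omega>" unfolding IHP_def
    proof (intro allI impI always_eventually)
      fix q' a' and m :: nat and i assume "a' \<in> A q'"
      then have "0 \<le> qlearn A c lr Q0 \<omega> i q' a'" by (rule Qnn_ctx)
      moreover have "0 \<le> 1 / real (Suc m)" by simp
      ultimately show "qlearn A c lr Q0 \<omega> i q' a' \<ge> vseq A p c 0 q' a' - 1 / real (Suc m)"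
        unfolding vseq_0 by linarith
    qed
  qed
next
  case (Suc n)
  have "AE \<omega> in sample_space p sel. \<forall>x\<in>{(q', a'). a' \<in> A q'}. \<forall>m::nat.
      eventually (\<lambda>i. qlearn A c lr Q0 \<omega> i (fst x) (snd x) \<ge> vseq A p c (Suc n) (fst x) (snd x) - 1 / real (Suc m)) sequentially"
  proof (rule AE_finite_allI[OF E_fin])
    fix x assume x: "x \<in> {(q', a'). a' \<in> A q'}"
    show "AE \<omega> in sample_space p sel. \<forall>m::nat.
      eventually (\<lambda>i. qlearn A c lr Q0 \<omega> i (fst x) (snd x) \<ge> vseq A p c (Suc n) (fst x) (snd x) - 1 / real (Suc m)) sequentially"
      unfolding AE_all_countable
    proof
      fix m :: nat
      show "AE \<omega> in sample_space p sel.
        eventually (\<lambda>i. qlearn A c lr Q0 \<omega> i (fst x) (snd x) \<ge> vseq A p c (Suc n) (fst x) (snd x) - 1 / real (Suc m)) sequentially"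
        by (rule step_pair[OF Suc]) (use x in auto)
    qed
  qed
  then show ?case by (rule eventually_mono) (auto simp: IHP_def)
qed

lemma main_result:
  assumes qa: "a \<in> A q" and inf: "Qstar A p c q a = \<infinity>"
  shows "AE \<omega> in sample_space p sel. filterlim (\<lambda>i. qlearn A c lr Q0 \<omega> i q a) at_top sequentially"
proof -
  have "AE \<omega> in sample_space p sel. \<forall>n. IHP n \<omega>" unfolding AE_all_countable using IH_all by blast
  then show ?thesis
  proof (rule eventually_mono)
    fix \<omega> assume H: "\<forall>n. IHP n \<omega>"
    show "filterlim (\<lambda>i. qlearn A c lr Q0 \<omega> i q a) at_top sequentially"
      unfolding filterlim_at_top
    proof
      fix Z :: real
      obtain n where n: "vseq A p c n q a > Z + 1" using vseq_unbounded[OF bmdp qa inf] by blast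
      have "eventually (\<lambda>i. qlearn A c lr Q0 \<omega> i q a \<ge> vseq A p c n q a - 1 / real (Suc 0)) sequentially"
        using H qa unfolding IHP_def by blast
      then show "eventually (\<lambda>i. Z \<le> qlearn A c lr Q0 \<omega> i q a) sequentially"
        by (rule eventually_mono) (use n in simp)
    qed
  qed
qed

end

theorem mainTheorem13:
  fixes A :: "'q::finite \<Rightarrow> 'a::finite set"
    and p :: "'q \<Rightarrow> 'a \<Rightarrow> 'q list pmf"
    and c :: "'q \<Rightarrow> 'a \<Rightarrow> real"
    and lr :: "nat \<Rightarrow> real"
    and sel :: "('q \<times> 'a) pmf"
    and pmin :: real
    and Q0 :: "'q \<Rightarrow> 'a \<Rightarrow> real"
    and q :: 'q and a :: 'a
  assumes bmdp: "is_bmdp A p c"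
    and lr_range: "\<And>i. 0 \<le> lr i \<and> lr i \<le> 1"
    and lr_sum: "\<not> summable lr"
    and lr_sq: "summable (\<lambda>i. (lr i)\<^sup>2)"
    and sel_support: "set_pmf sel \<subseteq> {(q', a'). a' \<in> A q'}"
    and pmin_pos: "pmin > 0"
    and sel_min: "\<And>q' a'. a' \<in> A q' \<Longrightarrow> pmf sel (q', a') \<ge> pmin"
    and Q0_nonneg: "\<And>q' a'. a' \<in> A q' \<Longrightarrow> Q0 q' a' \<ge> 0"
    and qa: "a \<in> A q"
    and inf: "Qstar A p c q a = \<infinity>"
  shows "AE \<omega> in sample_space p sel.
           filterlim (\<lambda>i. qlearn A c lr Q0 \<omega> i q a) at_top sequentially"
  by (rule main_result)
     (fact bmdp lr_range lr_sum lr_sq sel_support pmin_pos sel_min Q0_nonneg qa inf)+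

end
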